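(* Let $A$ be an algebra over a field $\Bbbk$. Then $A$ admits a normalized nearly Frobenius coproduct if and only if $A$ has Hochschild cohomological dimension $0$.
   Context: Algebras are associative and unital; tensor products over $\Bbbk$; $m$ denotes multiplication. A nearly Frobenius coproduct on $A$ is a $\Bbbk$-linear map $\Delta:A\to A\otimes A$ with $\Delta\circ m=(1\otimes m)\circ(\Delta\otimes 1)=(m\otimes 1)\circ(1\otimes\Delta)$; it is normalized if $m\circ\Delta=\operatorname{Id}_A$. $A$ has Hochschild cohomological dimension $0$ if the Hochschild cohomology $H^n(A,M)$ vanishes for all $n\ge 1$ and all $A$-bimodules $M$. *)

theory Defs
  imports Main "HOL.Vector_Spaces" "HOL-Library.Function_Algebras"
begin

text \<open>A (associative, unital) algebra over a field: the carrier is the whole type 'a,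
  with ring structure (zero algebra allowed) and a scalar multiplication sc
  making it a k-vector space such that multiplication is k-bilinear.\<close>

definition k_algebra :: "('k::field \<Rightarrow> 'a::{ring,monoid_mult} \<Rightarrow> 'a) \<Rightarrow> bool" where
  "k_algebra sc \<longleftrightarrow> vector_space sc \<and>
     (\<forall>c a b. sc c (a * b) = sc c a * b \<and> sc c (a * b) = a * sc c b)"

section \<open>The tensor product A \<otimes> A, as free vector space on A \<times> A modulo bilinearity\<close>

definition fin_supp :: "('b \<Rightarrow> 'k::zero) \<Rightarrow> bool" where
  "fin_supp f \<longleftrightarrow> finite {p. f p \<noteq> 0}"

definition tpure :: "'a \<Rightarrow> 'a \<Rightarrow> ('a \<times> 'a \<Rightarrow> 'k::{zero,one})" where
  "tpure x y = (\<lambda>p. if p = (x, y) then 1 else 0)"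

inductive_set tensor_rel :: "('k::field \<Rightarrow> 'a::{ring,monoid_mult} \<Rightarrow> 'a) \<Rightarrow> ('a \<times> 'a \<Rightarrow> 'k) set"
  for sc where
  zero: "(\<lambda>_. 0) \<in> tensor_rel sc"
| add: "f \<in> tensor_rel sc \<Longrightarrow> g \<in> tensor_rel sc \<Longrightarrow> (\<lambda>p. f p + g p) \<in> tensor_rel sc"
| smul: "f \<in> tensor_rel sc \<Longrightarrow> (\<lambda>p. c * f p) \<in> tensor_rel sc"
| addl: "(\<lambda>p. tpure (x + x') y p - tpure x y p - tpure x' y p) \<in> tensor_rel sc"
| addr: "(\<lambda>p. tpure x (y + y') p - tpure x y p - tpure x y' p) \<in> tensor_rel sc"
| smull: "(\<lambda>p. tpure (sc c x) y p - c * tpure x y p) \<in> tensor_rel sc"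
| smulr: "(\<lambda>p. tpure x (sc c y) p - c * tpure x y p) \<in> tensor_rel sc"

definition tensor_eq :: "('k::field \<Rightarrow> 'a::{ring,monoid_mult} \<Rightarrow> 'a) \<Rightarrow> ('a \<times> 'a \<Rightarrow> 'k) \<Rightarrow> ('a \<times> 'a \<Rightarrow> 'k) \<Rightarrow> bool" where
  "tensor_eq sc f g \<longleftrightarrow> (\<lambda>p. f p - g p) \<in> tensor_rel sc"

text \<open>Right action (x \<otimes> y) b = x \<otimes> y b and left action a (x \<otimes> y) = a x \<otimes> y on representatives.\<close>
definition trmul :: "('a \<times> 'a \<Rightarrow> 'k::comm_monoid_add) \<Rightarrow> 'a::times \<Rightarrow> ('a \<times> 'a \<Rightarrow> 'k)" where
  "trmul f b = (\<lambda>q. \<Sum>p\<in>{p. f p \<noteq> 0 \<and> (fst p, snd p * b) = q}. f p)"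

definition tlmul :: "'a::times \<Rightarrow> ('a \<times> 'a \<Rightarrow> 'k::comm_monoid_add) \<Rightarrow> ('a \<times> 'a \<Rightarrow> 'k)" where
  "tlmul a f = (\<lambda>q. \<Sum>p\<in>{p. f p \<noteq> 0 \<and> (a * fst p, snd p) = q}. f p)"

definition tmult :: "('k::field \<Rightarrow> 'a::{ring,monoid_mult} \<Rightarrow> 'a) \<Rightarrow> ('a \<times> 'a \<Rightarrow> 'k) \<Rightarrow> 'a" where
  "tmult sc f = (\<Sum>p\<in>{p. f p \<noteq> 0}. sc (f p) (fst p * snd p))"

text \<open>A k-linear map \<Delta> : A \<rightarrow> A \<otimes> A (given by representatives) with
  \<Delta>(ab) = \<Delta>(a) b = a \<Delta>(b), i.e. \<Delta> \<circ> m = (1 \<otimes> m)(\<Delta> \<otimes> 1) = (m \<otimes> 1)(1 \<otimes> \<Delta>)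
  evaluated on pure tensors a \<otimes> b.\<close>
definition nearly_frobenius :: "('k::field \<Rightarrow> 'a::{ring,monoid_mult} \<Rightarrow> 'a) \<Rightarrow> ('a \<Rightarrow> ('a \<times> 'a \<Rightarrow> 'k)) \<Rightarrow> bool" where
  "nearly_frobenius sc \<Delta> \<longleftrightarrow>
     (\<forall>a. fin_supp (\<Delta> a)) \<and>
     (\<forall>c a b. tensor_eq sc (\<Delta> (sc c a + b)) (\<lambda>p. c * \<Delta> a p + \<Delta> b p)) \<and>
     (\<forall>a b. tensor_eq sc (\<Delta> (a * b)) (trmul (\<Delta> a) b)) \<and>
     (\<forall>a b. tensor_eq sc (\<Delta> (a * b)) (tlmul a (\<Delta> b)))"

definition normalized :: "('k::field \<Rightarrow> 'a::{ring,monoid_mult} \<Rightarrow> 'a) \<Rightarrow> ('a \<Rightarrow> ('a \<times> 'a \<Rightarrow> 'k)) \<Rightarrow> bool" where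
  "normalized sc \<Delta> \<longleftrightarrow> (\<forall>a. tmult sc (\<Delta> a) = a)"

text \<open>An A-bimodule with carrier S (a subgroup of an abelian group type), left action L,
  right action R; k acts centrally (as usual for bimodules over a k-algebra).\<close>
definition bimodule :: "('k::field \<Rightarrow> 'a::{ring,monoid_mult} \<Rightarrow> 'a) \<Rightarrow> 'm::ab_group_add set
    \<Rightarrow> ('a \<Rightarrow> 'm \<Rightarrow> 'm) \<Rightarrow> ('m \<Rightarrow> 'a \<Rightarrow> 'm) \<Rightarrow> bool" where
  "bimodule sc S L R \<longleftrightarrow>
     0 \<in> S \<and> (\<forall>x\<in>S. \<forall>y\<in>S. x + y \<in> S) \<and> (\<forall>x\<in>S. - x \<in> S) \<and>
     (\<forall>a. \<forall>x\<in>S. L a x \<in> S \<and> R x a \<in> S) \<and>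
     (\<forall>a b. \<forall>x\<in>S. L (a * b) x = L a (L b x) \<and> R x (a * b) = R (R x a) b \<and>
                  L (a + b) x = L a x + L b x \<and> R x (a + b) = R x a + R x b \<and>
                  L a (R x b) = R (L a x) b) \<and>
     (\<forall>x\<in>S. L 1 x = x \<and> R x 1 = x) \<and>
     (\<forall>a. \<forall>x\<in>S. \<forall>y\<in>S. L a (x + y) = L a x + L a y \<and> R (x + y) a = R x a + R y a) \<and>
     (\<forall>c. \<forall>x\<in>S. L (sc c 1) x = R x (sc c 1))"

text \<open>Hochschild n-cochains: k-multilinear maps A^n \<rightarrow> M (equivalently k-linear maps
  A^{\<otimes>n} \<rightarrow> M), given as functions on lists of length n.\<close>
definition hoch_cochain :: "('k::field \<Rightarrow> 'a::{ring,monoid_mult} \<Rightarrow> 'a) \<Rightarrow> 'm::ab_group_add set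
    \<Rightarrow> ('a \<Rightarrow> 'm \<Rightarrow> 'm) \<Rightarrow> nat \<Rightarrow> ('a list \<Rightarrow> 'm) \<Rightarrow> bool" where
  "hoch_cochain sc S L n f \<longleftrightarrow>
     (\<forall>xs. length xs = n \<longrightarrow> f xs \<in> S) \<and>
     (\<forall>xs i c x y. length xs = n \<longrightarrow> i < n \<longrightarrow>
        f (xs[i := sc c x + y]) = L (sc c 1) (f (xs[i := x])) + f (xs[i := y]))"

definition alt_sign :: "nat \<Rightarrow> 'm::ab_group_add \<Rightarrow> 'm" where
  "alt_sign i x = (if even i then x else - x)"

definition hoch_d :: "('a::{ring,monoid_mult} \<Rightarrow> 'm::ab_group_add \<Rightarrow> 'm) \<Rightarrow> ('m \<Rightarrow> 'a \<Rightarrow> 'm)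
    \<Rightarrow> nat \<Rightarrow> ('a list \<Rightarrow> 'm) \<Rightarrow> 'a list \<Rightarrow> 'm" where
  "hoch_d L R n f xs =
     L (xs ! 0) (f (tl xs))
     + (\<Sum>i<n. alt_sign (Suc i) (f (take i xs @ [xs ! i * xs ! Suc i] @ drop (Suc (Suc i)) xs)))
     + alt_sign (Suc n) (R (f (butlast xs)) (last xs))"

definition hoch_vanish :: "('k::field \<Rightarrow> 'a::{ring,monoid_mult} \<Rightarrow> 'a) \<Rightarrow> 'm::ab_group_add set
    \<Rightarrow> ('a \<Rightarrow> 'm \<Rightarrow> 'm) \<Rightarrow> ('m \<Rightarrow> 'a \<Rightarrow> 'm) \<Rightarrow> nat \<Rightarrow> bool" where
  "hoch_vanish sc S L R n \<longleftrightarrow>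
     (\<forall>f. hoch_cochain sc S L n f \<and> (\<forall>xs. length xs = Suc n \<longrightarrow> hoch_d L R n f xs = 0) \<longrightarrow>
        (\<exists>g. hoch_cochain sc S L (n - 1) g \<and>
             (\<forall>xs. length xs = n \<longrightarrow> f xs = hoch_d L R (n - 1) g xs)))"

text \<open>Hochschild cohomological dimension 0, for all bimodules whose carrier lives in type 'm.\<close>
definition hoch_dim0 :: "('k::field \<Rightarrow> 'a::{ring,monoid_mult} \<Rightarrow> 'a) \<Rightarrow> 'm::ab_group_add itself \<Rightarrow> bool" where
  "hoch_dim0 sc (_::'m itself) \<longleftrightarrow>
     (\<forall>(S::'m set) L R. bimodule sc S L R \<longrightarrow> (\<forall>n\<ge>1. hoch_vanish sc S L R n))"

end

theory Submission
  imports Defs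
begin

definition E :: "('b \<Rightarrow> 'k \<Rightarrow> 'm::comm_monoid_add) \<Rightarrow> ('b \<Rightarrow> 'k::zero) \<Rightarrow> 'm" where
  "E G F = (\<Sum>p\<in>{p. F p \<noteq> 0}. G p (F p))"

definition addG :: "('b \<Rightarrow> 'k::ab_group_add \<Rightarrow> 'm::ab_group_add) \<Rightarrow> bool" where
  "addG G \<longleftrightarrow> (\<forall>p c d. G p (c + d) = G p c + G p d)"

lemma addG_zero: "addG G \<Longrightarrow> G p 0 = 0"
proof -
  assume "addG G"
  then have "G p (0 + 0) = G p 0 + G p 0" by (simp only: addG_def)
  then show ?thesis by simp
qed

lemma addG_minus: "addG G \<Longrightarrow> G p (- c) = - G p c"
proof -
  assume a: "addG G"
  then have "G p (c + - c) = G p c + G p (- c)" by (simp only: addG_def)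
  then have "G p c + G p (- c) = 0" using addG_zero[OF a] by simp
  then show ?thesis by (simp add: eq_neg_iff_add_eq_0 add.commute)
qed

lemma addG_diff: "addG G \<Longrightarrow> G p (c - d) = G p c - G p d"
proof -
  assume a: "addG G"
  have "G p (c + - d) = G p c + G p (- d)" using a by (simp only: addG_def)
  then show ?thesis by (simp only: diff_conv_add_uminus addG_minus[OF a])
qed

lemma addG_sum: "addG G \<Longrightarrow> G p (\<Sum>i\<in>I. f i) = (\<Sum>i\<in>I. G p (f i))"
  by (induction I rule: infinite_finite_induct) (auto simp: addG_zero addG_def)

lemma E_superset:
  assumes "finite T" "{p. F p \<noteq> 0} \<subseteq> T" "\<And>p. G p 0 = 0"
  shows "E G F = (\<Sum>p\<in>T. G p (F p))"
  unfolding E_def using assms by (intro sum.mono_neutral_left) auto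

lemma fin_supp_zero[simp]: "fin_supp (\<lambda>_. 0)" by (simp add: fin_supp_def)

lemma fin_supp_add: "fin_supp F \<Longrightarrow> fin_supp G \<Longrightarrow> fin_supp (\<lambda>p. F p + (G p::'k::monoid_add))"
  unfolding fin_supp_def by (rule finite_subset[of _ "{p. F p \<noteq> 0} \<union> {p. G p \<noteq> 0}"]) auto

lemma fin_supp_diff: "fin_supp F \<Longrightarrow> fin_supp G \<Longrightarrow> fin_supp (\<lambda>p. F p - (G p::'k::ab_group_add))"
  unfolding fin_supp_def by (rule finite_subset[of _ "{p. F p \<noteq> 0} \<union> {p. G p \<noteq> 0}"]) auto

lemma fin_supp_scale: "fin_supp F \<Longrightarrow> fin_supp (\<lambda>p. c * (F p::'k::field))"
  unfolding fin_supp_def by (rule finite_subset[of _ "{p. F p \<noteq> 0}"]) auto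

lemma fin_supp_tpure: "fin_supp (tpure x y :: _ \<Rightarrow> 'k::{zero,one})"
  unfolding fin_supp_def tpure_def by (rule finite_subset[of _ "{(x,y)}"]) auto

lemma fin_supp_sum: "finite I \<Longrightarrow> (\<And>i. i \<in> I \<Longrightarrow> fin_supp (h i)) \<Longrightarrow> fin_supp (\<lambda>p. \<Sum>i\<in>I. (h i p :: 'k::comm_monoid_add))"
  by (induction I rule: finite_induct) (auto intro: fin_supp_add)

lemma E_add:
  assumes "fin_supp F" "fin_supp F'" "addG G"
  shows "E G (\<lambda>p. F p + F' p) = E G F + E G F'"
proof -
  let ?T = "{p. F p \<noteq> 0} \<union> {p. F' p \<noteq> 0}"
  have T: "finite ?T" using assms by (auto simp: fin_supp_def)
  have "E G (\<lambda>p. F p + F' p) = (\<Sum>p\<in>?T. G p (F p + F' p))"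
    by (rule E_superset[OF T]) (auto simp: addG_zero[OF assms(3)])
  also have "\<dots> = (\<Sum>p\<in>?T. G p (F p)) + (\<Sum>p\<in>?T. G p (F' p))"
    using assms(3) by (simp add: addG_def sum.distrib)
  also have "(\<Sum>p\<in>?T. G p (F p)) = E G F"
    by (rule E_superset[OF T, symmetric]) (auto simp: addG_zero[OF assms(3)])
  also have "(\<Sum>p\<in>?T. G p (F' p)) = E G F'"
    by (rule E_superset[OF T, symmetric]) (auto simp: addG_zero[OF assms(3)])
  finally show ?thesis .
qed

lemma E_diff:
  assumes "fin_supp F" "fin_supp F'" "addG G"
  shows "E G (\<lambda>p. F p - F' p) = E G F - E G F'"
proof -
  let ?T = "{p. F p \<noteq> 0} \<union> {p. F' p \<noteq> 0}"
  have T: "finite ?T" using assms by (auto simp: fin_supp_def)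
  have "E G (\<lambda>p. F p - F' p) = (\<Sum>p\<in>?T. G p (F p - F' p))"
    by (rule E_superset[OF T]) (auto simp: addG_zero[OF assms(3)])
  also have "\<dots> = (\<Sum>p\<in>?T. G p (F p)) - (\<Sum>p\<in>?T. G p (F' p))"
    using assms(3) by (simp add: addG_diff sum_subtractf)
  also have "(\<Sum>p\<in>?T. G p (F p)) = E G F"
    by (rule E_superset[OF T, symmetric]) (auto simp: addG_zero[OF assms(3)])
  also have "(\<Sum>p\<in>?T. G p (F' p)) = E G F'"
    by (rule E_superset[OF T, symmetric]) (auto simp: addG_zero[OF assms(3)])
  finally show ?thesis .
qed

lemma E_diff3:
  assumes "fin_supp A" "fin_supp B" "fin_supp C" "addG G"
  shows "E G (\<lambda>p. A p - B p - C p) = E G A - E G B - E G C"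
proof -
  have "E G (\<lambda>p. A p - B p - C p) = E G (\<lambda>p. A p - B p) - E G C"
    using E_diff[OF fin_supp_diff[OF assms(1,2)] assms(3,4)] by simp
  also have "E G (\<lambda>p. A p - B p) = E G A - E G B" by (rule E_diff[OF assms(1,2,4)])
  finally show ?thesis .
qed

lemma E_tpure:
  assumes "addG G"
  shows "E G (\<lambda>p. c * tpure x y p) = G (x, y) (c::'k::field)"
proof -
  have "E G (\<lambda>p. c * tpure x y p) = (\<Sum>p\<in>{(x,y)}. G p (c * tpure x y p))"
    by (rule E_superset) (auto simp: tpure_def addG_zero[OF assms])
  then show ?thesis by (simp add: tpure_def)
qed

lemma E_tpure1:
  assumes "addG G"
  shows "E G (tpure x y) = G (x, y) (1::'k::field)"
  using E_tpure[OF assms, of 1 x y] by simp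

lemma tensor_rel_fin: "f \<in> tensor_rel sc \<Longrightarrow> fin_supp f"
  by (induction rule: tensor_rel.induct)
     (auto intro!: fin_supp_add fin_supp_scale fin_supp_diff fin_supp_tpure)

lemma tensor_rel_E:
  fixes sc :: "'k::field \<Rightarrow> 'a::{ring,monoid_mult} \<Rightarrow> 'a" and G :: "'a \<times> 'a \<Rightarrow> 'k \<Rightarrow> 'm::ab_group_add"
  assumes G: "addG G"
    and GL: "\<And>x x' y c. G (x + x', y) c = G (x, y) c + G (x', y) c"
    and GR: "\<And>x y y' c. G (x, y + y') c = G (x, y) c + G (x, y') c"
    and GSL: "\<And>x y c d. G (sc d x, y) c = G (x, y) (c * d)"
    and GSR: "\<And>x y c d. G (x, sc d y) c = G (x, y) (c * d)"
    and f: "f \<in> tensor_rel sc"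
  shows "E G (\<lambda>p. c * f p) = 0"
  using f
proof (induction arbitrary: c rule: tensor_rel.induct)
  case zero
  then show ?case by (simp add: E_def)
next
  case (add f g)
  have "E G (\<lambda>p. c * (f p + g p)) = E G (\<lambda>p. c * f p + c * g p)"
    by (simp add: distrib_left)
  also have "\<dots> = E G (\<lambda>p. c * f p) + E G (\<lambda>p. c * g p)"
    using add by (intro E_add G fin_supp_scale tensor_rel_fin)
  finally show ?case using add by simp
next
  case (smul f d)
  then show ?case using smul.IH[of "c * d"] by (simp add: mult.assoc)
next
  case (addl x x' y)
  have "E G (\<lambda>p. c * (tpure (x + x') y p - tpure x y p - tpure x' y p))
      = E G (\<lambda>p. c * tpure (x + x') y p - c * tpure x y p - c * tpure x' y p)"
    by (simp add: algebra_simps)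
  also have "\<dots> = E G (\<lambda>p. c * tpure (x + x') y p) - E G (\<lambda>p. c * tpure x y p) - E G (\<lambda>p. c * tpure x' y p)"
    by (intro E_diff3 E_diff G fin_supp_scale fin_supp_tpure)
  also have "\<dots> = 0" by (simp add: E_tpure G GL)
  finally show ?case .
next
  case (addr x y y')
  have "E G (\<lambda>p. c * (tpure x (y + y') p - tpure x y p - tpure x y' p))
      = E G (\<lambda>p. c * tpure x (y + y') p - c * tpure x y p - c * tpure x y' p)"
    by (simp add: algebra_simps)
  also have "\<dots> = E G (\<lambda>p. c * tpure x (y + y') p) - E G (\<lambda>p. c * tpure x y p) - E G (\<lambda>p. c * tpure x y' p)"
    by (intro E_diff3 E_diff G fin_supp_scale fin_supp_tpure)
  also have "\<dots> = 0" by (simp add: E_tpure G GR)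
  finally show ?case .
next
  case (smull d x y)
  have "E G (\<lambda>p. c * (tpure (sc d x) y p - d * tpure x y p))
      = E G (\<lambda>p. c * tpure (sc d x) y p - (c * d) * tpure x y p)"
    by (simp add: algebra_simps)
  also have "\<dots> = E G (\<lambda>p. c * tpure (sc d x) y p) - E G (\<lambda>p. (c * d) * tpure x y p)"
    by (intro E_diff3 E_diff G fin_supp_scale fin_supp_tpure)
  also have "\<dots> = 0" by (simp add: E_tpure G GSL)
  finally show ?case .
next
  case (smulr x d y)
  have "E G (\<lambda>p. c * (tpure x (sc d y) p - d * tpure x y p))
      = E G (\<lambda>p. c * tpure x (sc d y) p - (c * d) * tpure x y p)"
    by (simp add: algebra_simps)
  also have "\<dots> = E G (\<lambda>p. c * tpure x (sc d y) p) - E G (\<lambda>p. (c * d) * tpure x y p)"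
    by (intro E_diff3 E_diff G fin_supp_scale fin_supp_tpure)
  also have "\<dots> = 0" by (simp add: E_tpure G GSR)
  finally show ?case .
qed

lemma tensor_eq_E:
  fixes sc :: "'k::field \<Rightarrow> 'a::{ring,monoid_mult} \<Rightarrow> 'a" and G :: "'a \<times> 'a \<Rightarrow> 'k \<Rightarrow> 'm::ab_group_add"
  assumes G: "addG G"
    and GL: "\<And>x x' y c. G (x + x', y) c = G (x, y) c + G (x', y) c"
    and GR: "\<And>x y y' c. G (x, y + y') c = G (x, y) c + G (x, y') c"
    and GSL: "\<And>x y c d. G (sc d x, y) c = G (x, y) (c * d)"
    and GSR: "\<And>x y c d. G (x, sc d y) c = G (x, y) (c * d)"
    and eq: "tensor_eq sc F F'" and F: "fin_supp F" "fin_supp F'"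
  shows "E G F = E G F'"
proof -
  have r: "(\<lambda>p. F p - F' p) \<in> tensor_rel sc" using eq by (simp add: tensor_eq_def)
  have "E G (\<lambda>p. 1 * (F p - F' p)) = 0"
    by (rule tensor_rel_E[OF G GL GR GSL GSR r])
  then have "E G F - E G F' = 0" using E_diff[OF F G] by simp
  then show ?thesis by simp
qed


definition push :: "('b \<Rightarrow> 'c) \<Rightarrow> ('b \<Rightarrow> 'k::comm_monoid_add) \<Rightarrow> 'c \<Rightarrow> 'k" where
  "push h F = (\<lambda>q. \<Sum>p\<in>{p. F p \<noteq> 0 \<and> h p = q}. F p)"

lemma tlmul_push: "tlmul a F = push (\<lambda>p. (a * fst p, snd p)) F"
  by (simp add: tlmul_def push_def)

lemma trmul_push: "trmul F b = push (\<lambda>p. (fst p, snd p * b)) F"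
  by (simp add: trmul_def push_def)

lemma addG_ind: "addG (\<lambda>p c. if h p = q then c else (0::'k::ab_group_add))"
  by (simp add: addG_def)

lemma push_E:
  fixes F :: "'b \<Rightarrow> 'k::field"
  assumes "fin_supp F"
  shows "push h F q = E (\<lambda>p c. if h p = q then c else 0) F"
proof -
  have eq: "{p. F p \<noteq> 0 \<and> h p = q} = {p \<in> {p. F p \<noteq> 0}. h p = q}" by auto
  have fin: "finite {p. F p \<noteq> 0}" using assms by (simp add: fin_supp_def)
  show ?thesis
    unfolding push_def E_def eq by (rule sum.inter_filter[OF fin])
qed

lemma supp_push: "{q. push h F q \<noteq> 0} \<subseteq> h ` {p. F p \<noteq> 0}"
proof
  fix q assume q: "q \<in> {q. push h F q \<noteq> 0}"
  show "q \<in> h ` {p. F p \<noteq> 0}"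
  proof (rule ccontr)
    assume "q \<notin> h ` {p. F p \<noteq> 0}"
    then have e: "{p. F p \<noteq> 0 \<and> h p = q} = {}" by auto
    have "push h F q = 0" by (simp only: push_def e sum.empty)
    then show False using q by simp
  qed
qed

lemma fin_supp_push: "fin_supp F \<Longrightarrow> fin_supp (push h F)"
proof -
  assume "fin_supp F"
  then have "finite (h ` {p. F p \<noteq> 0})" by (simp add: fin_supp_def)
  then show ?thesis unfolding fin_supp_def by (rule finite_subset[OF supp_push])
qed

lemma E_push:
  fixes F :: "'b \<Rightarrow> 'k::field"
  assumes F: "fin_supp F" and G: "addG G"
  shows "E G (push h F) = (\<Sum>p\<in>{p. F p \<noteq> 0}. G (h p) (F p))"
proof -
  let ?S = "{p. F p \<noteq> 0}"
  have S: "finite ?S" using F by (simp add: fin_supp_def)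
  have "E G (push h F) = (\<Sum>q\<in>h ` ?S. G q (push h F q))"
    by (rule E_superset) (rule finite_imageI[OF S], rule supp_push, rule addG_zero[OF G])
  also have "\<dots> = (\<Sum>q\<in>h ` ?S. \<Sum>p\<in>{p \<in> ?S. h p = q}. G (h p) (F p))"
  proof (rule sum.cong[OF refl])
    fix q
    have "push h F q = (\<Sum>p\<in>{p \<in> ?S. h p = q}. F p)"
      unfolding push_def by (rule sum.cong) auto
    then have "G q (push h F q) = (\<Sum>p\<in>{p \<in> ?S. h p = q}. G q (F p))"
      by (simp add: addG_sum[OF G])
    also have "\<dots> = (\<Sum>p\<in>{p \<in> ?S. h p = q}. G (h p) (F p))"
      by (rule sum.cong) auto
    finally show "G q (push h F q) = \<dots>" .
  qed
  also have "\<dots> = (\<Sum>p\<in>?S. G (h p) (F p))"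
    by (rule sum.image_gen[OF S, symmetric])
  finally show ?thesis .
qed

lemma push_add:
  fixes F :: "'b \<Rightarrow> 'k::field"
  assumes "fin_supp F" "fin_supp F'"
  shows "push h (\<lambda>p. F p + F' p) = (\<lambda>q. push h F q + push h F' q)"
proof
  fix q
  show "push h (\<lambda>p. F p + F' p) q = push h F q + push h F' q"
    by (simp only: push_E[OF fin_supp_add[OF assms]] E_add[OF assms addG_ind] push_E[OF assms(1)] push_E[OF assms(2)])
qed

lemma push_diff:
  fixes F :: "'b \<Rightarrow> 'k::field"
  assumes "fin_supp F" "fin_supp F'"
  shows "push h (\<lambda>p. F p - F' p) = (\<lambda>q. push h F q - push h F' q)"
proof
  fix q
  show "push h (\<lambda>p. F p - F' p) q = push h F q - push h F' q"
    by (simp only: push_E[OF fin_supp_diff[OF assms]] E_diff[OF assms addG_ind] push_E[OF assms(1)] push_E[OF assms(2)])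
qed

lemma push_scale:
  "push h (\<lambda>p. c * F p) = (\<lambda>q. c * push h F q :: 'k::field)"
proof (cases "c = 0")
  case True
  then show ?thesis by (simp add: push_def)
next
  case False
  then show ?thesis by (simp add: push_def sum_distrib_left)
qed

lemma push_zero: "push h (\<lambda>_. 0) = (\<lambda>_. 0)"
  by (simp add: push_def)

lemma push_comp:
  fixes F :: "'b \<Rightarrow> 'k::field"
  assumes F: "fin_supp F"
  shows "push h' (push h F) = push (\<lambda>p. h' (h p)) F"
proof
  fix q
  have "push h' (push h F) q = E (\<lambda>p c. if h' p = q then c else 0) (push h F)"
    by (rule push_E[OF fin_supp_push[OF F]])
  also have "\<dots> = (\<Sum>p\<in>{p. F p \<noteq> 0}. (if h' (h p) = q then F p else 0))"
    by (rule E_push[OF F addG_ind])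
  also have "\<dots> = push (\<lambda>p. h' (h p)) F q"
    by (simp add: push_E[OF F] E_def)
  finally show "push h' (push h F) q = push (\<lambda>p. h' (h p)) F q" .
qed

lemma push_id: "push (\<lambda>p. p) F = F"
proof
  fix q
  have "{p. F p \<noteq> 0 \<and> p = q} = (if F q \<noteq> 0 then {q} else {})" by auto
  then show "push (\<lambda>p. p) F q = F q" by (simp add: push_def)
qed

lemma push_tpure:
  "push h (\<lambda>p. c * tpure x y p) = (\<lambda>q. c * tpure (fst (h (x, y))) (snd (h (x, y))) q :: 'k::field)"
proof
  fix q
  have "push h (\<lambda>p. c * tpure x y p) q = E (\<lambda>p c. if h p = q then c else 0) (\<lambda>p. c * tpure x y p)"
    by (rule push_E) (intro fin_supp_scale fin_supp_tpure)
  also have "\<dots> = (if h (x, y) = q then c else 0)"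
    by (rule E_tpure[OF addG_ind])
  finally show "push h (\<lambda>p. c * tpure x y p) q = c * tpure (fst (h (x, y))) (snd (h (x, y))) q"
    by (auto simp: tpure_def)
qed

lemma push_tpure1:
  "push h (tpure x y) = (tpure (fst (h (x, y))) (snd (h (x, y))) :: _ \<Rightarrow> 'k::field)"
  using push_tpure[of h 1 x y] by simp

lemma push_expand:
  assumes F: "fin_supp F"
  shows "push h F = (\<lambda>q. \<Sum>p\<in>{p. F p \<noteq> 0}. F p * tpure (fst (h p)) (snd (h p)) q :: 'k::field)"
proof
  fix q
  show "push h F q = (\<Sum>p\<in>{p. F p \<noteq> 0}. F p * tpure (fst (h p)) (snd (h p)) q)"
    by (simp add: push_E[OF F] E_def tpure_def) (rule sum.cong, auto)
qed

lemma self_expand: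
  assumes F: "fin_supp F"
  shows "F = (\<lambda>q. \<Sum>p\<in>{p. F p \<noteq> 0}. F p * tpure (fst p) (snd p) q :: 'k::field)"
  using push_expand[OF F, of "\<lambda>p. p"] by (simp add: push_id)

context
  fixes sc :: "'k::field \<Rightarrow> 'a::{ring,monoid_mult} \<Rightarrow> 'a"
begin

lemma teq_refl: "tensor_eq sc F F"
  unfolding tensor_eq_def using tensor_rel.zero[of sc] by simp

lemma rel_neg: "f \<in> tensor_rel sc \<Longrightarrow> (\<lambda>p. - f p) \<in> tensor_rel sc"
  using tensor_rel.smul[of f sc "-1"] by simp

lemma teq_sym: "tensor_eq sc F F' \<Longrightarrow> tensor_eq sc F' F"
  unfolding tensor_eq_def using rel_neg[of "\<lambda>p. F p - F' p"] by simp

lemma teq_trans: "tensor_eq sc F F' \<Longrightarrow> tensor_eq sc F' F'' \<Longrightarrow> tensor_eq sc F F''"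
  unfolding tensor_eq_def using tensor_rel.add[of "\<lambda>p. F p - F' p" sc "\<lambda>p. F' p - F'' p"] by simp

lemma teq_add: "tensor_eq sc F F' \<Longrightarrow> tensor_eq sc G G' \<Longrightarrow>
    tensor_eq sc (\<lambda>p. F p + G p) (\<lambda>p. F' p + G' p)"
  unfolding tensor_eq_def using tensor_rel.add[of "\<lambda>p. F p - F' p" sc "\<lambda>p. G p - G' p"]
  by (simp add: algebra_simps)

lemma teq_diff: "tensor_eq sc F F' \<Longrightarrow> tensor_eq sc G G' \<Longrightarrow>
    tensor_eq sc (\<lambda>p. F p - G p) (\<lambda>p. F' p - G' p)"
  unfolding tensor_eq_def using tensor_rel.add[of "\<lambda>p. F p - F' p" sc "\<lambda>p. - (G p - G' p)"]
    rel_neg[of "\<lambda>p. G p - G' p"]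
  by (simp add: algebra_simps)

lemma teq_scale: "tensor_eq sc F F' \<Longrightarrow> tensor_eq sc (\<lambda>p. c * F p) (\<lambda>p. c * F' p)"
  unfolding tensor_eq_def using tensor_rel.smul[of "\<lambda>p. F p - F' p" sc c]
  by (simp add: algebra_simps)

lemma rel_sum: "finite I \<Longrightarrow> (\<And>i. i \<in> I \<Longrightarrow> h i \<in> tensor_rel sc) \<Longrightarrow>
    (\<lambda>p. \<Sum>i\<in>I. h i p) \<in> tensor_rel sc"
proof (induction I rule: finite_induct)
  case empty
  then show ?case using tensor_rel.zero[of sc] by simp
next
  case (insert x F)
  then show ?case using tensor_rel.add[of "h x" sc "\<lambda>p. \<Sum>i\<in>F. h i p"] by simp
qed

lemma teq_sum: "finite I \<Longrightarrow> (\<And>i. i \<in> I \<Longrightarrow> tensor_eq sc (F i) (F' i)) \<Longrightarrow>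
    tensor_eq sc (\<lambda>p. \<Sum>i\<in>I. F i p) (\<lambda>p. \<Sum>i\<in>I. F' i p)"
  unfolding tensor_eq_def using rel_sum[of I "\<lambda>i p. F i p - F' i p"]
  by (simp add: sum_subtractf)

lemma teq_lincomb:
  assumes "finite S" "\<And>x y. tensor_eq sc (P x y) (Q x y)"
  shows "tensor_eq sc (\<lambda>q. \<Sum>p\<in>S. F p * P (fst p) (snd p) q) (\<lambda>q. \<Sum>p\<in>S. F p * Q (fst p) (snd p) q)"
  using assms by (intro teq_sum teq_scale) auto

lemma teq_rel: "tensor_eq sc F F' \<Longrightarrow> (\<lambda>p. F p - F' p) \<in> tensor_rel sc"
  by (simp add: tensor_eq_def)

lemma teq_of_rel: "(\<lambda>p. F p - F' p) \<in> tensor_rel sc \<Longrightarrow> tensor_eq sc F F'"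
  by (simp add: tensor_eq_def)

end


lemma push_t3:
  "push h (\<lambda>p. tpure u1 u2 p - tpure v1 v2 p - tpure w1 w2 p) =
   (\<lambda>q. tpure (fst (h (u1,u2))) (snd (h (u1,u2))) q - tpure (fst (h (v1,v2))) (snd (h (v1,v2))) q
        - tpure (fst (h (w1,w2))) (snd (h (w1,w2))) q :: 'k::field)"
  by (simp only: push_diff[OF fin_supp_diff[OF fin_supp_tpure fin_supp_tpure] fin_supp_tpure]
      push_diff[OF fin_supp_tpure fin_supp_tpure] push_tpure1)

lemma push_t2:
  "push h (\<lambda>p. tpure u1 u2 p - c * tpure v1 v2 p) =
   (\<lambda>q. tpure (fst (h (u1,u2))) (snd (h (u1,u2))) q - c * tpure (fst (h (v1,v2))) (snd (h (v1,v2))) q :: 'k::field)"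
  by (simp only: push_diff[OF fin_supp_tpure fin_supp_scale[OF fin_supp_tpure]] push_tpure1 push_tpure)

locale kalg =
  fixes sc :: "'k::field \<Rightarrow> 'a::{ring,monoid_mult} \<Rightarrow> 'a"
  assumes kalg: "k_algebra sc"

sublocale kalg \<subseteq> V: vector_space sc
  using kalg by (simp add: k_algebra_def)

context kalg
begin

lemma sc_mult_left:
  fixes F F' :: "'a \<times> 'a \<Rightarrow> 'k" and a b :: 'a
  shows "sc c (a * b) = sc c a * b"
  using kalg unfolding k_algebra_def by blast

lemma sc_mult_right: "sc c (a * b) = a * sc c b"
  using kalg unfolding k_algebra_def by blast

lemma sc_one_left: "sc c a = sc c 1 * a"
  using sc_mult_left[of c 1 a] by simp

lemma sc_one_right: "sc c a = a * sc c 1"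
  using sc_mult_right[of c a 1] by simp

lemma push_rel:
  assumes hadd1: "\<And>x x' y. h (x + x', y) = (fst (h (x, y)) + fst (h (x', y)), snd (h (x, y)))"
      and hadd1': "\<And>x x' y. snd (h (x', y)) = snd (h (x, y))"
      and hadd2: "\<And>x y y'. h (x, y + y') = (fst (h (x, y)), snd (h (x, y)) + snd (h (x, y')))"
      and hadd2': "\<And>x y y'. fst (h (x, y')) = fst (h (x, y))"
      and hsc1: "\<And>c x y. h (sc c x, y) = (sc c (fst (h (x, y))), snd (h (x, y)))"
      and hsc2: "\<And>c x y. h (x, sc c y) = (fst (h (x, y)), sc c (snd (h (x, y))))"
      and f: "f \<in> tensor_rel sc"
  shows "push h f \<in> tensor_rel sc"
  using f
proof (induction rule: tensor_rel.induct)
  case zero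
  then show ?case by (simp add: push_zero tensor_rel.zero)
next
  case (add f g)
  then show ?case
    by (simp add: push_add tensor_rel_fin tensor_rel.add)
next
  case (smul f c)
  then show ?case by (simp add: push_scale tensor_rel.smul)
next
  case (addl x x' y)
  show ?case unfolding push_t3 hadd1 using hadd1'[of x' y x] tensor_rel.addl by simp
next
  case (addr x y y')
  show ?case unfolding push_t3 hadd2 using hadd2'[of x y' y] tensor_rel.addr by simp
next
  case (smull c x y)
  show ?case unfolding push_t2 hsc1 using tensor_rel.smull by simp
next
  case (smulr x c y)
  show ?case unfolding push_t2 hsc2 using tensor_rel.smulr by simp
qed

lemma tlmul_rel: "f \<in> tensor_rel sc \<Longrightarrow> tlmul a f \<in> tensor_rel sc"
  unfolding tlmul_push
  by (rule push_rel) (auto simp: distrib_left sc_mult_right)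

lemma trmul_rel: "f \<in> tensor_rel sc \<Longrightarrow> trmul f b \<in> tensor_rel sc"
  unfolding trmul_push
  by (rule push_rel) (auto simp: distrib_right sc_mult_left)

lemma teq_push_gen:
  fixes F :: "'a \<times> 'a \<Rightarrow> 'k"
  assumes "\<And>f. f \<in> tensor_rel sc \<Longrightarrow> push h f \<in> tensor_rel sc"
    and "tensor_eq sc F F'" "fin_supp F" "fin_supp F'"
  shows "tensor_eq sc (push h F) (push h F')"
proof -
  have "push h (\<lambda>p. F p - F' p) \<in> tensor_rel sc"
    using assms(1,2) unfolding tensor_eq_def by blast
  then show ?thesis unfolding tensor_eq_def push_diff[OF assms(3,4)] .
qed

lemma teq_tlmul:
  fixes F F' :: "'a \<times> 'a \<Rightarrow> 'k" and a b :: 'a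
  shows "tensor_eq sc F F' \<Longrightarrow> fin_supp F \<Longrightarrow> fin_supp F' \<Longrightarrow>
    tensor_eq sc (tlmul a F) (tlmul a F')"
  unfolding tlmul_push by (rule teq_push_gen) (auto simp: tlmul_rel[unfolded tlmul_push])

lemma teq_trmul:
  fixes F F' :: "'a \<times> 'a \<Rightarrow> 'k" and a b :: 'a
  shows "tensor_eq sc F F' \<Longrightarrow> fin_supp F \<Longrightarrow> fin_supp F' \<Longrightarrow>
    tensor_eq sc (trmul F b) (trmul F' b)"
  unfolding trmul_push by (rule teq_push_gen) (auto simp: trmul_rel[unfolded trmul_push])

lemma fin_tlmul:
  fixes F F' :: "'a \<times> 'a \<Rightarrow> 'k" and a b :: 'a
  shows "fin_supp F \<Longrightarrow> fin_supp (tlmul a F)"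
  unfolding tlmul_push by (rule fin_supp_push)

lemma fin_trmul:
  fixes F F' :: "'a \<times> 'a \<Rightarrow> 'k" and a b :: 'a
  shows "fin_supp F \<Longrightarrow> fin_supp (trmul F b)"
  unfolding trmul_push by (rule fin_supp_push)

lemma tlmul_mult:
  fixes F F' :: "'a \<times> 'a \<Rightarrow> 'k" and a b :: 'a
  shows "fin_supp F \<Longrightarrow> tlmul (a * b) F = tlmul a (tlmul b F)"
  unfolding tlmul_push by (simp add: push_comp mult.assoc)

lemma trmul_mult:
  fixes F F' :: "'a \<times> 'a \<Rightarrow> 'k" and a b :: 'a
  shows "fin_supp F \<Longrightarrow> trmul F (a * b) = trmul (trmul F a) b"
  unfolding trmul_push by (simp add: push_comp mult.assoc)

lemma tl_tr_comm:
  fixes F F' :: "'a \<times> 'a \<Rightarrow> 'k" and a b :: 'a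
  shows "fin_supp F \<Longrightarrow> tlmul a (trmul F b) = trmul (tlmul a F) b"
  unfolding trmul_push tlmul_push by (simp add: push_comp fin_supp_push)

lemma tlmul_one:
  fixes F F' :: "'a \<times> 'a \<Rightarrow> 'k" and a b :: 'a
  shows "tlmul 1 F = F"
  unfolding tlmul_push using push_id[of F] by simp

lemma trmul_one:
  fixes F F' :: "'a \<times> 'a \<Rightarrow> 'k" and a b :: 'a
  shows "trmul F 1 = F"
  unfolding trmul_push using push_id[of F] by simp

lemma tlmul_tpure:
  fixes x y a :: 'a
  shows "tlmul a (tpure x y) = (tpure (a * x) y :: 'a \<times> 'a \<Rightarrow> 'k)"
  unfolding tlmul_push by (simp add: push_tpure1)

lemma trmul_tpure:
  fixes x y b :: 'a
  shows "trmul (tpure x y) b = (tpure x (y * b) :: 'a \<times> 'a \<Rightarrow> 'k)"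
  unfolding trmul_push by (simp add: push_tpure1)

lemma tlmul_expand:
  fixes F F' :: "'a \<times> 'a \<Rightarrow> 'k" and a b :: 'a
  shows "fin_supp F \<Longrightarrow>
    tlmul a F = (\<lambda>q. \<Sum>p\<in>{p. F p \<noteq> 0}. F p * tpure (a * fst p) (snd p) q)"
  unfolding tlmul_push by (simp add: push_expand)

lemma trmul_expand:
  fixes F F' :: "'a \<times> 'a \<Rightarrow> 'k" and a b :: 'a
  shows "fin_supp F \<Longrightarrow>
    trmul F b = (\<lambda>q. \<Sum>p\<in>{p. F p \<noteq> 0}. F p * tpure (fst p) (snd p * b) q)"
  unfolding trmul_push by (simp add: push_expand)

lemma tpure_addl:
  fixes x y x' :: 'a
  shows "tensor_eq sc (tpure (x + x') y) (\<lambda>q. tpure x y q + tpure x' y q)"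
  using tensor_rel.addl[of x x' y sc] unfolding tensor_eq_def by (simp add: diff_diff_eq)

lemma tpure_addr:
  fixes x y y' :: 'a
  shows "tensor_eq sc (tpure x (y + y')) (\<lambda>q. tpure x y q + tpure x y' q)"
  using tensor_rel.addr[of x y y' sc] unfolding tensor_eq_def by (simp add: diff_diff_eq)

lemma tpure_scl:
  fixes x y :: 'a
  shows "tensor_eq sc (tpure (sc c x) y) (\<lambda>q. c * tpure x y q)"
  using tensor_rel.smull[of sc c x y] unfolding tensor_eq_def by simp

lemma tpure_scr:
  fixes x y :: 'a
  shows "tensor_eq sc (tpure x (sc c y)) (\<lambda>q. c * tpure x y q)"
  using tensor_rel.smulr[of x sc c y] unfolding tensor_eq_def by simp

lemma tlmul_addl:
  fixes F F' :: "'a \<times> 'a \<Rightarrow> 'k" and a b :: 'a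
  assumes F: "fin_supp F"
  shows "tensor_eq sc (tlmul (a + b) F) (\<lambda>q. tlmul a F q + tlmul b F q)"
proof -
  have "tensor_eq sc (\<lambda>q. \<Sum>p\<in>{p. F p \<noteq> 0}. F p * tpure ((a + b) * fst p) (snd p) q)
     (\<lambda>q. \<Sum>p\<in>{p. F p \<noteq> 0}. F p * (\<lambda>x y q. tpure (a * x) y q + tpure (b * x) y q) (fst p) (snd p) q)"
    by (rule teq_lincomb[where P="\<lambda>x y. tpure ((a + b) * x) y"])
       (use F in \<open>auto simp: fin_supp_def distrib_right tpure_addl\<close>)
  then show ?thesis
    using F by (simp add: tlmul_expand distrib_left sum.distrib)
qed

lemma trmul_addr:
  fixes F F' :: "'a \<times> 'a \<Rightarrow> 'k" and a b :: 'a
  assumes F: "fin_supp F"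
  shows "tensor_eq sc (trmul F (a + b)) (\<lambda>q. trmul F a q + trmul F b q)"
proof -
  have "tensor_eq sc (\<lambda>q. \<Sum>p\<in>{p. F p \<noteq> 0}. F p * tpure (fst p) (snd p * (a + b)) q)
     (\<lambda>q. \<Sum>p\<in>{p. F p \<noteq> 0}. F p * (\<lambda>x y q. tpure x (y * a) q + tpure x (y * b) q) (fst p) (snd p) q)"
    by (rule teq_lincomb[where P="\<lambda>x y. tpure x (y * (a + b))"])
       (use F in \<open>auto simp: fin_supp_def distrib_left tpure_addr\<close>)
  then show ?thesis
    using F by (simp add: trmul_expand distrib_left sum.distrib)
qed

lemma tlmul_sc:
  fixes F F' :: "'a \<times> 'a \<Rightarrow> 'k" and a b :: 'a
  assumes F: "fin_supp F"
  shows "tensor_eq sc (tlmul (sc c 1) F) (\<lambda>q. c * F q)"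
proof -
  have "tensor_eq sc (\<lambda>q. \<Sum>p\<in>{p. F p \<noteq> 0}. F p * tpure (sc c 1 * fst p) (snd p) q)
     (\<lambda>q. \<Sum>p\<in>{p. F p \<noteq> 0}. F p * (\<lambda>x y q. c * tpure x y q) (fst p) (snd p) q)"
    by (rule teq_lincomb[where P="\<lambda>x y. tpure (sc c 1 * x) y"])
       (use F in \<open>auto simp: fin_supp_def sc_one_left[symmetric] tpure_scl\<close>)
  moreover have "(\<lambda>q. c * F q) = (\<lambda>q. \<Sum>p\<in>{p. F p \<noteq> 0}. F p * (c * tpure (fst p) (snd p) q))"
    by (subst self_expand[OF F]) (simp add: sum_distrib_left algebra_simps)
  ultimately show ?thesis
    using F by (simp add: tlmul_expand)
qed

lemma trmul_sc:
  fixes F F' :: "'a \<times> 'a \<Rightarrow> 'k" and a b :: 'a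
  assumes F: "fin_supp F"
  shows "tensor_eq sc (trmul F (sc c 1)) (\<lambda>q. c * F q)"
proof -
  have "tensor_eq sc (\<lambda>q. \<Sum>p\<in>{p. F p \<noteq> 0}. F p * tpure (fst p) (snd p * sc c 1) q)
     (\<lambda>q. \<Sum>p\<in>{p. F p \<noteq> 0}. F p * (\<lambda>x y q. c * tpure x y q) (fst p) (snd p) q)"
    by (rule teq_lincomb[where P="\<lambda>x y. tpure x (y * sc c 1)"])
       (use F in \<open>auto simp: fin_supp_def sc_one_right[symmetric] tpure_scr\<close>)
  moreover have "(\<lambda>q. c * F q) = (\<lambda>q. \<Sum>p\<in>{p. F p \<noteq> 0}. F p * (c * tpure (fst p) (snd p) q))"
    by (subst self_expand[OF F]) (simp add: sum_distrib_left algebra_simps)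
  ultimately show ?thesis
    using F by (simp add: trmul_expand)
qed

definition tmG :: "'a \<times> 'a \<Rightarrow> 'k \<Rightarrow> 'a" where
  "tmG p c = sc c (fst p * snd p)"

lemma addG_tmG:
  fixes F F' :: "'a \<times> 'a \<Rightarrow> 'k" and a b :: 'a
  shows "addG tmG"
  by (simp add: addG_def tmG_def V.scale_left_distrib)

lemma tmult_E: "tmult sc F = E tmG F"
  by (simp add: tmult_def E_def tmG_def)

lemma tmult_tlmul: "fin_supp F \<Longrightarrow> tmult sc (tlmul a F) = a * tmult sc F"
  unfolding tmult_E tlmul_push E_push[OF _ addG_tmG]
  by (simp add: E_def tmG_def sum_distrib_left sc_mult_right mult.assoc)

lemma tmult_trmul:
  fixes F F' :: "'a \<times> 'a \<Rightarrow> 'k" and a b :: 'a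
  shows "fin_supp F \<Longrightarrow> tmult sc (trmul F b) = tmult sc F * b"
  unfolding tmult_E trmul_push E_push[OF _ addG_tmG]
  by (simp add: E_def tmG_def sum_distrib_right sc_mult_left mult.assoc)

lemma tmult_add:
  fixes F F' :: "'a \<times> 'a \<Rightarrow> 'k" and a b :: 'a
  shows "fin_supp F \<Longrightarrow> fin_supp F' \<Longrightarrow> tmult sc (\<lambda>p. F p + F' p) = tmult sc F + tmult sc F'"
  unfolding tmult_E by (rule E_add[OF _ _ addG_tmG])

lemma tmult_diff:
  fixes F F' :: "'a \<times> 'a \<Rightarrow> 'k" and a b :: 'a
  shows "fin_supp F \<Longrightarrow> fin_supp F' \<Longrightarrow> tmult sc (\<lambda>p. F p - F' p) = tmult sc F - tmult sc F'"
  unfolding tmult_E by (rule E_diff[OF _ _ addG_tmG])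

lemma tmult_tpure:
  fixes x y :: 'a
  shows "tmult sc (tpure x y) = x * y"
  unfolding tmult_E by (simp add: E_tpure1[OF addG_tmG] tmG_def)

lemma tmult_teq:
  fixes F F' :: "'a \<times> 'a \<Rightarrow> 'k" and a b :: 'a
  shows "tensor_eq sc F F' \<Longrightarrow> fin_supp F \<Longrightarrow> fin_supp F' \<Longrightarrow> tmult sc F = tmult sc F'"
  unfolding tmult_E
  by (rule tensor_eq_E[OF addG_tmG])
     (auto simp: tmG_def distrib_left distrib_right V.scale_right_distrib sc_mult_left[symmetric] sc_mult_right[symmetric])

end


lemma alt_sign_sum: "alt_sign i (\<Sum>j\<in>I. f j) = (\<Sum>j\<in>I. alt_sign i (f j))"
  by (simp add: alt_sign_def sum_negf)

lemma alt_sign_SS: "alt_sign (Suc (Suc j)) x = - alt_sign (Suc j) x"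
  by (simp add: alt_sign_def)

lemma alt_sign_add: "alt_sign i (x + y) = alt_sign i x + alt_sign i y"
  by (simp add: alt_sign_def)

locale bimod = kalg sc for sc :: "'k::field \<Rightarrow> 'a::{ring,monoid_mult} \<Rightarrow> 'a" +
  fixes S :: "'m::ab_group_add set" and L :: "'a \<Rightarrow> 'm \<Rightarrow> 'm" and R :: "'m \<Rightarrow> 'a \<Rightarrow> 'm"
  assumes bim: "bimodule sc S L R"
begin

lemma S0: "0 \<in> S" using bim by (simp add: bimodule_def)
lemma Sadd: "x \<in> S \<Longrightarrow> y \<in> S \<Longrightarrow> x + y \<in> S" using bim by (simp add: bimodule_def)
lemma Sneg: "x \<in> S \<Longrightarrow> - x \<in> S" using bim by (simp add: bimodule_def)
lemma SL: "x \<in> S \<Longrightarrow> L a x \<in> S" using bim by (simp add: bimodule_def)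
lemma SR: "x \<in> S \<Longrightarrow> R x a \<in> S" using bim by (simp add: bimodule_def)
lemma Lmult: "x \<in> S \<Longrightarrow> L (a * b) x = L a (L b x)" using bim unfolding bimodule_def by blast
lemma Rmult: "x \<in> S \<Longrightarrow> R x (a * b) = R (R x a) b" using bim unfolding bimodule_def by blast
lemma Laddl: "x \<in> S \<Longrightarrow> L (a + b) x = L a x + L b x" using bim unfolding bimodule_def by blast
lemma Raddr: "x \<in> S \<Longrightarrow> R x (a + b) = R x a + R x b" using bim unfolding bimodule_def by blast
lemma LR: "x \<in> S \<Longrightarrow> L a (R x b) = R (L a x) b" using bim unfolding bimodule_def by blast
lemma L1: "x \<in> S \<Longrightarrow> L 1 x = x" using bim unfolding bimodule_def by blast
lemma R1: "x \<in> S \<Longrightarrow> R x 1 = x" using bim unfolding bimodule_def by blast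
lemma Laddr: "x \<in> S \<Longrightarrow> y \<in> S \<Longrightarrow> L a (x + y) = L a x + L a y" using bim unfolding bimodule_def by blast
lemma Raddl: "x \<in> S \<Longrightarrow> y \<in> S \<Longrightarrow> R (x + y) a = R x a + R y a" using bim unfolding bimodule_def by blast
lemma Lsc: "x \<in> S \<Longrightarrow> L (sc c 1) x = R x (sc c 1)" using bim unfolding bimodule_def by blast

lemma Sdiff: "x \<in> S \<Longrightarrow> y \<in> S \<Longrightarrow> x - y \<in> S"
proof -
  assume "x \<in> S" "y \<in> S"
  then have "x + - y \<in> S" by (intro Sadd Sneg)
  then show ?thesis by (simp only: diff_conv_add_uminus)
qed

lemma Ssum: "(\<And>i. i \<in> I \<Longrightarrow> f i \<in> S) \<Longrightarrow> (\<Sum>i\<in>I. f i) \<in> S"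
  by (induction I rule: infinite_finite_induct) (auto simp: S0 Sadd)

lemma Salt: "x \<in> S \<Longrightarrow> alt_sign i x \<in> S"
  by (simp add: alt_sign_def Sneg)

lemma L0r: "L a 0 = 0"
  using Laddr[OF S0 S0, of a] by simp

lemma Lnegr: "x \<in> S \<Longrightarrow> L a (- x) = - L a x"
proof -
  assume x: "x \<in> S"
  have "L a (x + - x) = L a x + L a (- x)" by (rule Laddr[OF x Sneg[OF x]])
  then have "L a x + L a (- x) = 0" by (simp add: L0r)
  then show ?thesis by (simp add: eq_neg_iff_add_eq_0 add.commute)
qed

lemma Lalt: "x \<in> S \<Longrightarrow> L a (alt_sign i x) = alt_sign i (L a x)"
  by (simp add: alt_sign_def Lnegr)

lemma Lsumr: "(\<And>i. i \<in> I \<Longrightarrow> f i \<in> S) \<Longrightarrow> L a (\<Sum>i\<in>I. f i) = (\<Sum>i\<in>I. L a (f i))"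
proof (induction I rule: infinite_finite_induct)
  case (insert x F)
  then show ?case by (simp add: Laddr Ssum)
qed (auto simp: L0r)

lemma L0l: "x \<in> S \<Longrightarrow> L 0 x = 0"
  using Laddl[of x 0 0] by simp

lemma Lsuml: "x \<in> S \<Longrightarrow> L (\<Sum>i\<in>I. a i) x = (\<Sum>i\<in>I. L (a i) x)"
  by (induction I rule: infinite_finite_induct) (auto simp: L0l Laddl)

lemma R0l: "R 0 a = 0"
  using Raddl[OF S0 S0, of a] by simp

lemma Rnegl: "x \<in> S \<Longrightarrow> R (- x) a = - R x a"
proof -
  assume x: "x \<in> S"
  have "R (x + - x) a = R x a + R (- x) a" by (rule Raddl[OF x Sneg[OF x]])
  then have "R x a + R (- x) a = 0" by (simp add: R0l)
  then show ?thesis by (simp add: eq_neg_iff_add_eq_0 add.commute)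
qed

lemma Rsuml: "(\<And>i. i \<in> I \<Longrightarrow> f i \<in> S) \<Longrightarrow> R (\<Sum>i\<in>I. f i) a = (\<Sum>i\<in>I. R (f i) a)"
proof (induction I rule: infinite_finite_induct)
  case (insert x F)
  then show ?case by (simp add: Raddl Ssum)
qed (auto simp: R0l)

lemma Lsc_comm: "x \<in> S \<Longrightarrow> L (sc c y) (L (sc d 1) x) = L (sc d 1) (L (sc c y) x)"
proof -
  assume x: "x \<in> S"
  have "sc c y * sc d 1 = sc d 1 * sc c y"
    by (metis sc_one_left sc_one_right)
  then show ?thesis using x by (simp add: Lmult[symmetric])
qed

end

locale cochain = bimod sc S L R for sc :: "'k::field \<Rightarrow> 'a::{ring,monoid_mult} \<Rightarrow> 'a"
  and S :: "'m::ab_group_add set" and L R +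
  fixes n :: nat and f :: "'a list \<Rightarrow> 'm"
  assumes coch: "hoch_cochain sc S L n f"
begin

lemma fS: "length xs = n \<Longrightarrow> f xs \<in> S"
  using coch by (simp add: hoch_cochain_def)

lemma flin: "length xs = n \<Longrightarrow> i < n \<Longrightarrow>
    f (xs[i := sc c x + y]) = L (sc c 1) (f (xs[i := x])) + f (xs[i := y])"
  using coch unfolding hoch_cochain_def by blast

lemma fzero: assumes "length xs = n" "i < n" shows "f (xs[i := 0]) = 0"
proof -
  have "f (xs[i := sc 1 0 + 0]) = L (sc 1 1) (f (xs[i := 0])) + f (xs[i := 0])"
    by (rule flin[OF assms])
  moreover have "f (xs[i := 0]) \<in> S" using assms by (simp add: fS)
  ultimately show ?thesis by (simp add: L1)
qed

lemma fadd: assumes "length xs = n" "i < n"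
  shows "f (xs[i := x + y]) = f (xs[i := x]) + f (xs[i := y])"
proof -
  have "f (xs[i := sc 1 x + y]) = L (sc 1 1) (f (xs[i := x])) + f (xs[i := y])"
    by (rule flin[OF assms])
  moreover have "f (xs[i := x]) \<in> S" using assms by (simp add: fS)
  ultimately show ?thesis by (simp add: L1)
qed

lemma fsc: assumes "length xs = n" "i < n"
  shows "f (xs[i := sc c x]) = L (sc c 1) (f (xs[i := x]))"
proof -
  have "f (xs[i := sc c x + 0]) = L (sc c 1) (f (xs[i := x])) + f (xs[i := 0])"
    by (rule flin[OF assms])
  then show ?thesis using fzero[OF assms] by simp
qed

end


lemma alt_sign_1: "alt_sign (Suc 0) x = - x"
  by (simp add: alt_sign_def)

locale sepc = cochain sc S L R n f for sc :: "'k::field \<Rightarrow> 'a::{ring,monoid_mult} \<Rightarrow> 'a"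
  and S :: "'m::ab_group_add set" and L R n f +
  fixes e :: "'a \<times> 'a \<Rightarrow> 'k"
  assumes fe: "fin_supp e"
    and ecomm: "\<And>a. tensor_eq sc (trmul e a) (tlmul a e)"
    and te: "tmult sc e = 1"
    and npos: "n \<ge> 1"
begin

definition g :: "'a list \<Rightarrow> 'm" where
  "g rest = (\<Sum>p\<in>{p. e p \<noteq> 0}. L (sc (e p) (fst p)) (f (snd p # rest)))"

lemma len_cons: "length rest = n - 1 \<Longrightarrow> length (y # rest) = n"
  using npos by simp

lemma gS: "length rest = n - 1 \<Longrightarrow> g rest \<in> S"
  unfolding g_def by (intro Ssum SL fS len_cons)

lemma T1:
  assumes m: "m \<in> S"
  shows "(\<Sum>p\<in>{p. e p \<noteq> 0}. L (sc (e p) (fst p)) (L (snd p) m)) = m"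
proof -
  have "(\<Sum>p\<in>{p. e p \<noteq> 0}. L (sc (e p) (fst p)) (L (snd p) m))
      = (\<Sum>p\<in>{p. e p \<noteq> 0}. L (sc (e p) (fst p * snd p)) m)"
    by (rule sum.cong) (simp_all add: Lmult[OF m, symmetric] sc_mult_left)
  also have "\<dots> = L (\<Sum>p\<in>{p. e p \<noteq> 0}. sc (e p) (fst p * snd p)) m"
    by (rule Lsuml[OF m, symmetric])
  also have "\<dots> = L (tmult sc e) m" by (simp add: tmult_def)
  also have "\<dots> = m" by (simp add: te L1 m)
  finally show ?thesis .
qed

lemma key:
  assumes len: "length rest = n - 1"
  shows "(\<Sum>p\<in>{p. e p \<noteq> 0}. L (sc (e p) (fst p)) (f ((snd p * a) # rest))) = L a (g rest)"
proof -
  define G where "G = (\<lambda>(q::'a \<times> 'a) (c::'k). L (sc c (fst q)) (f (snd q # rest)))"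
  have fS': "\<And>y. f (y # rest) \<in> S" by (rule fS[OF len_cons[OF len]])
  have lenn: "\<And>y. length (y # rest) = n" by (rule len_cons[OF len])
  have n0: "0 < n" using npos by simp
  have G: "addG G"
    unfolding addG_def G_def by (simp add: V.scale_left_distrib Laddl fS')
  have GL: "\<And>x x' y c. G (x + x', y) c = G (x, y) c + G (x', y) c"
    unfolding G_def by (simp add: V.scale_right_distrib Laddl fS')
  have GR: "\<And>x y y' c. G (x, y + y') c = G (x, y) c + G (x, y') c"
  proof -
    fix x y y' c
    have "f ((y + y') # rest) = f (y # rest) + f (y' # rest)"
      using fadd[OF lenn[of 0] n0, of y y'] by simp
    then show "G (x, y + y') c = G (x, y) c + G (x, y') c"
      unfolding G_def by (simp add: Laddr fS')
  qed
  have GSL: "\<And>x y c d. G (sc d x, y) c = G (x, y) (c * d)"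
    unfolding G_def by (simp add: mult.commute)
  have GSR: "\<And>x y c d. G (x, sc d y) c = G (x, y) (c * d)"
  proof -
    fix x y c d
    have "f (sc d y # rest) = L (sc d 1) (f (y # rest))"
      using fsc[OF lenn[of 0] n0, of d y] by simp
    moreover have "sc c x * sc d 1 = sc (c * d) x"
      by (simp add: sc_one_right[symmetric] mult.commute)
    ultimately show "G (x, sc d y) c = G (x, y) (c * d)"
      unfolding G_def by (simp add: Lmult[OF fS', symmetric])
  qed
  have "E G (trmul e a) = E G (tlmul a e)"
    by (rule tensor_eq_E[OF G GL GR GSL GSR ecomm fin_trmul[OF fe] fin_tlmul[OF fe]])
  moreover have "E G (trmul e a) = (\<Sum>p\<in>{p. e p \<noteq> 0}. L (sc (e p) (fst p)) (f ((snd p * a) # rest)))"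
    unfolding trmul_push E_push[OF fe G] by (simp add: G_def)
  moreover have "E G (tlmul a e) = L a (g rest)"
  proof -
    have "E G (tlmul a e) = (\<Sum>p\<in>{p. e p \<noteq> 0}. L (sc (e p) (a * fst p)) (f (snd p # rest)))"
      unfolding tlmul_push E_push[OF fe G] by (simp add: G_def)
    also have "\<dots> = (\<Sum>p\<in>{p. e p \<noteq> 0}. L a (L (sc (e p) (fst p)) (f (snd p # rest))))"
      by (rule sum.cong) (simp_all add: sc_mult_right Lmult fS')
    also have "\<dots> = L a (g rest)"
      unfolding g_def by (rule Lsumr[symmetric]) (simp add: SL fS')
    finally show ?thesis .
  qed
  ultimately show ?thesis by simp
qed

lemma g_cochain: "hoch_cochain sc S L (n - 1) g"
  unfolding hoch_cochain_def
proof (intro conjI allI impI)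
  fix xs :: "'a list" assume "length xs = n - 1"
  then show "g xs \<in> S" by (rule gS)
next
  fix xs :: "'a list" and i c x y
  assume len: "length xs = n - 1" and i: "i < n - 1"
  have lenn: "\<And>y. length (y # xs) = n" by (rule len_cons[OF len])
  have si: "Suc i < n" using i by simp
  have "g (xs[i := sc c x + y]) = (\<Sum>p\<in>{p. e p \<noteq> 0}.
        L (sc c 1) (L (sc (e p) (fst p)) (f (snd p # xs[i := x]))) + L (sc (e p) (fst p)) (f (snd p # xs[i := y])))"
    unfolding g_def
  proof (rule sum.cong[OF refl])
    fix p :: "'a \<times> 'a"
    have "f (snd p # xs[i := sc c x + y]) = L (sc c 1) (f (snd p # xs[i := x])) + f (snd p # xs[i := y])"
      using flin[OF lenn[of "snd p"] si, of c x y] by simp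
    moreover have "f (snd p # xs[i := x]) \<in> S" "f (snd p # xs[i := y]) \<in> S"
      using lenn[of "snd p"] by (auto intro!: fS)
    ultimately show "L (sc (e p) (fst p)) (f (snd p # xs[i := sc c x + y])) =
        L (sc c 1) (L (sc (e p) (fst p)) (f (snd p # xs[i := x]))) + L (sc (e p) (fst p)) (f (snd p # xs[i := y]))"
      by (simp add: Laddr SL Lsc_comm)
  qed
  also have "\<dots> = L (sc c 1) (g (xs[i := x])) + g (xs[i := y])"
    unfolding g_def sum.distrib
    by (subst Lsumr) (use npos in \<open>auto intro!: SL fS simp: len_cons len\<close>)
  finally show "g (xs[i := sc c x + y]) = L (sc c 1) (g (xs[i := x])) + g (xs[i := y])" .
qed

end


lemma grp_aux: "(x::'m::ab_group_add) + (- y + - c) + - d = 0 \<Longrightarrow> x = y + c + d"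
proof -
  assume "x + (- y + - c) + - d = 0"
  then have "x - (y + c + d) = 0" by (simp add: algebra_simps)
  then show ?thesis by simp
qed

context sepc
begin

lemma cocycle_expand:
  assumes len: "length xs = Suc k" and nk: "n = Suc k" and x0: "xs ! 0 = a" and tl: "tl xs = as"
  shows "hoch_d L R n f (y # xs) =
    L y (f xs) + (- f ((y * a) # as) +
      (\<Sum>j<k. alt_sign (Suc (Suc j)) (f (y # (take j xs @ [xs ! j * xs ! Suc j] @ drop (Suc (Suc j)) xs)))))
    + alt_sign (Suc n) (R (f (y # butlast xs)) (last xs))"
proof -
  have ne: "xs \<noteq> []" using len by auto
  have s: "(\<Sum>i<n. alt_sign (Suc i) (f (take i (y # xs) @ [(y # xs) ! i * (y # xs) ! Suc i] @ drop (Suc (Suc i)) (y # xs))))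
      = - f ((y * a) # as) +
      (\<Sum>j<k. alt_sign (Suc (Suc j)) (f (y # (take j xs @ [xs ! j * xs ! Suc j] @ drop (Suc (Suc j)) xs))))"
    unfolding nk sum.lessThan_Suc_shift
    using x0 tl by (simp add: alt_sign_1 drop_Suc)
  show ?thesis
    unfolding hoch_d_def s using ne by simp
qed

lemma vanish:
  assumes coc: "\<forall>xs. length xs = Suc n \<longrightarrow> hoch_d L R n f xs = 0"
    and len: "length xs = n"
  shows "f xs = hoch_d L R (n - 1) g xs"
proof -
  obtain k where nk: "n = Suc k" using npos by (cases n) auto
  obtain a as where xs: "xs = a # as" using len nk by (cases xs) auto
  have lenk: "length xs = Suc k" using len nk by simp
  have x0: "xs ! 0 = a" and tl: "tl xs = as" using xs by simp_all
  have las: "length as = n - 1" using len xs by simp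
  define M where "M j = take j xs @ [xs ! j * xs ! Suc j] @ drop (Suc (Suc j)) xs" for j
  have lenM: "length (M j) = n - 1" if "j < k" for j
    using that lenk nk by (simp add: M_def)
  have lenbl: "length (butlast xs) = n - 1" using len by simp
  let ?P = "{p. e p \<noteq> 0}"
  let ?z = "\<lambda>p. sc (e p) (fst p)"
  have fxs: "f xs \<in> S" by (rule fS[OF len])
  have fc: "\<And>y r. length r = n - 1 \<Longrightarrow> f (y # r) \<in> S" by (rule fS[OF len_cons])
  \<comment> \<open>the cocycle condition, multiplied by z on the left\<close>
  have cp: "L (?z p) (L (snd p) (f xs)) + (- L (?z p) (f ((snd p * a) # as)) +
      (\<Sum>j<k. alt_sign (Suc (Suc j)) (L (?z p) (f (snd p # M j)))))
      + alt_sign (Suc n) (R (L (?z p) (f (snd p # butlast xs))) (last xs)) = 0" for p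
  proof -
    let ?y = "snd p" and ?w = "?z p"
    have A: "L ?y (f xs) \<in> S" by (rule SL[OF fxs])
    have B: "f ((?y * a) # as) \<in> S" by (rule fc[OF las])
    have C: "\<And>j. j \<in> {..<k} \<Longrightarrow> f (?y # M j) \<in> S" using lenM fc by simp
    have C': "(\<Sum>j<k. alt_sign (Suc (Suc j)) (f (?y # M j))) \<in> S" by (intro Ssum Salt C)
    have D: "R (f (?y # butlast xs)) (last xs) \<in> S" by (rule SR[OF fc[OF lenbl]])
    have "hoch_d L R n f (?y # xs) = 0" using coc len by simp
    then have "L ?y (f xs) + (- f ((?y * a) # as) + (\<Sum>j<k. alt_sign (Suc (Suc j)) (f (?y # M j))))
      + alt_sign (Suc n) (R (f (?y # butlast xs)) (last xs)) = 0"
      unfolding cocycle_expand[OF lenk nk x0 tl] M_def .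
    then have "L ?w (L ?y (f xs) + (- f ((?y * a) # as) + (\<Sum>j<k. alt_sign (Suc (Suc j)) (f (?y # M j))))
      + alt_sign (Suc n) (R (f (?y # butlast xs)) (last xs))) = 0"
      by (simp add: L0r)
    moreover have "L ?w (L ?y (f xs) + (- f ((?y * a) # as) + (\<Sum>j<k. alt_sign (Suc (Suc j)) (f (?y # M j))))
      + alt_sign (Suc n) (R (f (?y # butlast xs)) (last xs))) =
      L ?w (L ?y (f xs)) + (- L ?w (f ((?y * a) # as)) + (\<Sum>j<k. alt_sign (Suc (Suc j)) (L ?w (f (?y # M j)))))
      + alt_sign (Suc n) (R (L ?w (f (?y # butlast xs))) (last xs))"
    proof -
      let ?A = "L ?y (f xs)" and ?B = "f ((?y * a) # as)"
        and ?C = "\<Sum>j<k. alt_sign (Suc (Suc j)) (f (?y # M j))"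
        and ?D = "alt_sign (Suc n) (R (f (?y # butlast xs)) (last xs))"
      have D': "?D \<in> S" by (rule Salt[OF D])
      have "L ?w (?A + (- ?B + ?C) + ?D) = L ?w ?A + (L ?w (- ?B) + L ?w ?C) + L ?w ?D"
        by (simp only: Laddr[OF Sadd[OF A Sadd[OF Sneg[OF B] C']] D'] Laddr[OF A Sadd[OF Sneg[OF B] C']]
            Laddr[OF Sneg[OF B] C'])
      also have "L ?w (- ?B) = - L ?w ?B" by (rule Lnegr[OF B])
      also have "L ?w ?C = (\<Sum>j<k. alt_sign (Suc (Suc j)) (L ?w (f (?y # M j))))"
        by (subst Lsumr) (auto intro!: Salt C simp: Lalt C)
      also have "L ?w ?D = alt_sign (Suc n) (R (L ?w (f (?y # butlast xs))) (last xs))"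
        by (simp add: Lalt[OF D] LR[OF fc[OF lenbl]])
      finally show ?thesis .
    qed
    ultimately show ?thesis by simp
  qed
  have sum0: "(\<Sum>p\<in>?P. L (?z p) (L (snd p) (f xs)) + (- L (?z p) (f ((snd p * a) # as)) +
      (\<Sum>j<k. alt_sign (Suc (Suc j)) (L (?z p) (f (snd p # M j)))))
      + alt_sign (Suc n) (R (L (?z p) (f (snd p # butlast xs))) (last xs))) = 0"
    using cp by simp
  have S1: "(\<Sum>p\<in>?P. L (?z p) (L (snd p) (f xs))) = f xs" by (rule T1[OF fxs])
  have S2: "(\<Sum>p\<in>?P. L (?z p) (f ((snd p * a) # as))) = L a (g as)" by (rule key[OF las])
  have S3: "(\<Sum>p\<in>?P. \<Sum>j<k. alt_sign (Suc (Suc j)) (L (?z p) (f (snd p # M j))))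
      = (\<Sum>j<k. alt_sign (Suc (Suc j)) (g (M j)))"
    by (subst sum.swap) (simp add: g_def alt_sign_sum)
  have S4: "(\<Sum>p\<in>?P. alt_sign (Suc n) (R (L (?z p) (f (snd p # butlast xs))) (last xs)))
      = alt_sign (Suc n) (R (g (butlast xs)) (last xs))"
    unfolding g_def alt_sign_sum[symmetric]
    by (subst Rsuml) (auto intro!: SL fc lenbl)
  have main: "f xs + (- L a (g as) + (\<Sum>j<k. alt_sign (Suc (Suc j)) (g (M j))))
      + alt_sign (Suc n) (R (g (butlast xs)) (last xs)) = 0"
    using sum0 unfolding sum.distrib sum_negf S1 S2 S3 S4 .
  have hd: "hoch_d L R (n - 1) g xs = L a (g as) + (\<Sum>j<k. alt_sign (Suc j) (g (M j)))
      + alt_sign (Suc k) (R (g (butlast xs)) (last xs))"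
    unfolding hoch_d_def M_def using nk x0 tl by simp
  have "(\<Sum>j<k. alt_sign (Suc (Suc j)) (g (M j))) = - (\<Sum>j<k. alt_sign (Suc j) (g (M j)))"
    by (simp add: alt_sign_SS sum_negf)
  moreover have "alt_sign (Suc n) (R (g (butlast xs)) (last xs)) = - alt_sign (Suc k) (R (g (butlast xs)) (last xs))"
    using nk alt_sign_SS by simp
  ultimately have "f xs + (- L a (g as) + - (\<Sum>j<k. alt_sign (Suc j) (g (M j))))
      + - alt_sign (Suc k) (R (g (butlast xs)) (last xs)) = 0"
    using main by simp
  then show ?thesis
    unfolding hd by (rule grp_aux)
qed

end

lemma dir1:
  fixes sc :: "'k::field \<Rightarrow> 'a::{ring,monoid_mult} \<Rightarrow> 'a"
    and S :: "'m::ab_group_add set"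
  assumes ka: "k_algebra sc" and nf: "nearly_frobenius sc \<Delta>" and nz: "normalized sc \<Delta>"
    and bm: "bimodule sc S L R" and n: "n \<ge> 1"
  shows "hoch_vanish sc S L R n"
  unfolding hoch_vanish_def
proof (intro allI impI)
  fix f assume H: "hoch_cochain sc S L n f \<and> (\<forall>xs. length xs = Suc n \<longrightarrow> hoch_d L R n f xs = 0)"
  have fe: "fin_supp (\<Delta> 1)" using nf by (simp add: nearly_frobenius_def)
  have ec: "tensor_eq sc (trmul (\<Delta> 1) a) (tlmul a (\<Delta> 1))" for a
  proof -
    have 1: "tensor_eq sc (\<Delta> (1 * a)) (trmul (\<Delta> 1) a)" using nf unfolding nearly_frobenius_def by blast
    have 2: "tensor_eq sc (\<Delta> (a * 1)) (tlmul a (\<Delta> 1))" using nf unfolding nearly_frobenius_def by blast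
    show ?thesis using teq_trans[OF teq_sym[OF 1]] 2 by simp
  qed
  have te: "tmult sc (\<Delta> 1) = 1" using nz by (simp add: normalized_def)
  interpret sepc sc S L R n f "\<Delta> 1"
    by unfold_locales (use ka bm H fe ec te n in auto)
  show "\<exists>g. hoch_cochain sc S L (n - 1) g \<and> (\<forall>xs. length xs = n \<longrightarrow> f xs = hoch_d L R (n - 1) g xs)"
    using g_cochain vanish H by blast
qed


lemma E_zero: "E G (\<lambda>_. 0) = 0"
  by (simp add: E_def)

lemma E_neg:
  assumes "fin_supp F" "addG G"
  shows "E G (\<lambda>p. - F p) = - E G F"
  using E_diff[OF fin_supp_zero assms(1) assms(2)] by (simp add: E_zero)

lemma E_scale:
  assumes "\<And>p c d. G p (c * d) = c * G p d"
  shows "E G (\<lambda>p. c * F p) = c * E G (F :: _ \<Rightarrow> 'k::field)"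
proof (cases "c = 0")
  case True
  then show ?thesis by (simp add: E_def)
next
  case False
  then show ?thesis by (simp add: E_def assms sum_distrib_left)
qed

locale kbasis = kalg sc for sc :: "'k::field \<Rightarrow> 'a::{ring,monoid_mult} \<Rightarrow> 'a" +
  fixes B :: "'a set"
  assumes indB: "\<not> module.dependent sc B"
    and spanB: "\<And>x. x \<in> module.span sc B"
begin

definition rep :: "'a \<Rightarrow> 'a \<Rightarrow> 'k" where
  "rep x b = V.representation B x b"

lemma rep_add: "rep (x + y) b = rep x b + rep y b"
  unfolding rep_def using V.representation_add[OF indB spanB spanB] by simp

lemma rep_sc: "rep (sc c x) b = c * rep x b"
  unfolding rep_def using V.representation_scale[OF indB spanB] by simp

lemma rep_fin: "finite {b. rep x b \<noteq> 0}"
  unfolding rep_def by (rule V.finite_representation)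

lemma rep_sum: "(\<Sum>b\<in>{b. rep x b \<noteq> 0}. sc (rep x b) b) = x"
  unfolding rep_def by (rule V.sum_nonzero_representation_eq[OF indB spanB])

definition KG :: "'a \<times> 'a \<Rightarrow> 'a \<times> 'a \<Rightarrow> 'k \<Rightarrow> 'k" where
  "KG q p c = c * (rep (fst p) (fst q) * rep (snd p) (snd q))"

definition Phi :: "('a \<times> 'a \<Rightarrow> 'k) \<Rightarrow> ('a \<times> 'a \<Rightarrow> 'k)" where
  "Phi F = (\<lambda>q. E (KG q) F)"

lemma addG_KG: "addG (KG q)"
  by (simp add: addG_def KG_def distrib_right)

lemma Phi_rel: "f \<in> tensor_rel sc \<Longrightarrow> Phi f = (\<lambda>_. 0)"
proof
  fix q assume f: "f \<in> tensor_rel sc"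
  have "E (KG q) (\<lambda>p. 1 * f p) = 0"
    by (rule tensor_rel_E[OF addG_KG _ _ _ _ f])
       (simp_all add: KG_def rep_add rep_sc algebra_simps)
  then show "Phi f q = 0" by (simp add: Phi_def)
qed

lemma Phi_teq: "tensor_eq sc F F' \<Longrightarrow> fin_supp F \<Longrightarrow> fin_supp F' \<Longrightarrow> Phi F = Phi F'"
  unfolding Phi_def
  by (rule ext, rule tensor_eq_E[OF addG_KG])
     (simp_all add: KG_def rep_add rep_sc algebra_simps)

lemma Phi_add: "fin_supp F \<Longrightarrow> fin_supp F' \<Longrightarrow> Phi (\<lambda>p. F p + F' p) = (\<lambda>q. Phi F q + Phi F' q)"
  unfolding Phi_def by (simp add: E_add addG_KG)

lemma Phi_diff: "fin_supp F \<Longrightarrow> fin_supp F' \<Longrightarrow> Phi (\<lambda>p. F p - F' p) = (\<lambda>q. Phi F q - Phi F' q)"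
  unfolding Phi_def by (simp add: E_diff addG_KG)

lemma Phi_neg: "fin_supp F \<Longrightarrow> Phi (\<lambda>p. - F p) = (\<lambda>q. - Phi F q)"
  unfolding Phi_def by (simp add: E_neg addG_KG)

lemma Phi_scale: "Phi (\<lambda>p. c * F p) = (\<lambda>q. c * Phi F q)"
  unfolding Phi_def by (rule ext, rule E_scale) (simp add: KG_def)

lemma Phi_zero: "Phi (\<lambda>_. 0) = (\<lambda>_. 0)"
  unfolding Phi_def by (simp add: E_zero)

lemma Phi_tpure: "Phi (tpure x y) = (\<lambda>q. rep x (fst q) * rep y (snd q))"
  unfolding Phi_def by (simp add: E_tpure1[OF addG_KG] KG_def)

lemma fin_Phi:
  assumes F: "fin_supp F"
  shows "fin_supp (Phi F)"
proof -
  let ?T = "\<Union>p\<in>{p. F p \<noteq> 0}. {b. rep (fst p) b \<noteq> 0} \<times> {b. rep (snd p) b \<noteq> 0}"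
  have "finite ?T" using F by (auto simp: fin_supp_def rep_fin)
  moreover have "{q. Phi F q \<noteq> 0} \<subseteq> ?T"
  proof
    fix q assume "q \<in> {q. Phi F q \<noteq> 0}"
    then have "(\<Sum>p\<in>{p. F p \<noteq> 0}. KG q p (F p)) \<noteq> 0" by (simp add: Phi_def E_def)
    then obtain p where "p \<in> {p. F p \<noteq> 0}" "KG q p (F p) \<noteq> 0"
      by (rule sum.not_neutral_contains_not_neutral)
    then show "q \<in> ?T" by (cases q, cases p) (auto simp: KG_def)
  qed
  ultimately show ?thesis unfolding fin_supp_def by (rule finite_subset[rotated])
qed

lemma tpure_suml:
  "finite I \<Longrightarrow> tensor_eq sc (tpure (\<Sum>b\<in>I. sc (c b) b) y) (\<lambda>q. \<Sum>b\<in>I. c b * tpure b y q)"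
proof (induction I rule: finite_induct)
  case empty
  have "tensor_eq sc (tpure 0 y) (\<lambda>q. tpure 0 y q + tpure 0 y q)"
    using tpure_addl[of 0 0 y] by simp
  then have "(\<lambda>p. tpure 0 y p - (tpure 0 y p + tpure 0 y p)) \<in> tensor_rel sc"
    by (simp add: tensor_eq_def)
  then have "(\<lambda>p. - tpure 0 y p) \<in> tensor_rel sc" by simp
  from rel_neg[OF this] have "(\<lambda>p. tpure 0 y p - 0) \<in> tensor_rel sc" by simp
  then show ?case by (simp add: tensor_eq_def)
next
  case (insert x F)
  have "tensor_eq sc (tpure (sc (c x) x + (\<Sum>b\<in>F. sc (c b) b)) y)
      (\<lambda>q. tpure (sc (c x) x) y q + tpure (\<Sum>b\<in>F. sc (c b) b) y q)"
    by (rule tpure_addl)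
  moreover have "tensor_eq sc (\<lambda>q. tpure (sc (c x) x) y q + tpure (\<Sum>b\<in>F. sc (c b) b) y q)
      (\<lambda>q. c x * tpure x y q + (\<Sum>b\<in>F. c b * tpure b y q))"
    by (rule teq_add[OF tpure_scl insert.IH])
  ultimately show ?case using insert.hyps by (simp add: teq_trans[of sc])
qed

lemma tpure_sumr:
  "finite I \<Longrightarrow> tensor_eq sc (tpure x (\<Sum>b\<in>I. sc (c b) b)) (\<lambda>q. \<Sum>b\<in>I. c b * tpure x b q)"
proof (induction I rule: finite_induct)
  case empty
  have "tensor_eq sc (tpure x 0) (\<lambda>q. tpure x 0 q + tpure x 0 q)"
    using tpure_addr[of x 0 0] by simp
  then have "(\<lambda>p. tpure x 0 p - (tpure x 0 p + tpure x 0 p)) \<in> tensor_rel sc"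
    by (simp add: tensor_eq_def)
  then have "(\<lambda>p. - tpure x 0 p) \<in> tensor_rel sc" by simp
  from rel_neg[OF this] have "(\<lambda>p. tpure x 0 p - 0) \<in> tensor_rel sc" by simp
  then show ?case by (simp add: tensor_eq_def)
next
  case (insert z F)
  have "tensor_eq sc (tpure x (sc (c z) z + (\<Sum>b\<in>F. sc (c b) b)))
      (\<lambda>q. tpure x (sc (c z) z) q + tpure x (\<Sum>b\<in>F. sc (c b) b) q)"
    by (rule tpure_addr)
  moreover have "tensor_eq sc (\<lambda>q. tpure x (sc (c z) z) q + tpure x (\<Sum>b\<in>F. sc (c b) b) q)
      (\<lambda>q. c z * tpure x z q + (\<Sum>b\<in>F. c b * tpure x b q))"
    by (rule teq_add[OF tpure_scr insert.IH])
  ultimately show ?case using insert.hyps by (simp add: teq_trans[of sc])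
qed

lemma pure_K3: "tensor_eq sc (tpure x y) (Phi (tpure x y))"
proof -
  let ?Bx = "{b. rep x b \<noteq> 0}" and ?By = "{b. rep y b \<noteq> 0}"
  have 1: "tensor_eq sc (tpure x y) (\<lambda>q. \<Sum>b\<in>?Bx. rep x b * tpure b y q)"
    using tpure_suml[OF rep_fin[of x], where c="rep x" and y=y] by (simp add: rep_sum)
  have 2: "tensor_eq sc (\<lambda>q. \<Sum>b\<in>?Bx. rep x b * tpure b y q)
      (\<lambda>q. \<Sum>b\<in>?Bx. rep x b * (\<Sum>b'\<in>?By. rep y b' * tpure b b' q))"
  proof (intro teq_sum teq_scale)
    fix b
    show "tensor_eq sc (tpure b y) (\<lambda>q. \<Sum>b'\<in>?By. rep y b' * tpure b b' q)"
      using tpure_sumr[OF rep_fin[of y], where c="rep y" and x=b] by (simp add: rep_sum)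
  qed (simp add: rep_fin)
  have 3: "(\<lambda>q. \<Sum>b\<in>?Bx. rep x b * (\<Sum>b'\<in>?By. rep y b' * tpure b b' q)) = Phi (tpure x y)"
  proof
    fix q :: "'a \<times> 'a"
    obtain u v where q: "q = (u, v)" by (cases q)
    have "(\<Sum>b\<in>?Bx. rep x b * (\<Sum>b'\<in>?By. rep y b' * tpure b b' q))
        = (\<Sum>b\<in>?Bx. if b = u then rep x b * (\<Sum>b'\<in>?By. if b' = v then rep y b' else 0) else 0)"
      by (rule sum.cong) (auto simp: q tpure_def intro!: sum.cong)
    also have "\<dots> = rep x u * rep y v"
      using rep_fin[of x] rep_fin[of y] by auto
    finally show "(\<Sum>b\<in>?Bx. rep x b * (\<Sum>b'\<in>?By. rep y b' * tpure b b' q)) = Phi (tpure x y) q"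
      by (simp add: Phi_tpure q)
  qed
  show ?thesis using teq_trans[OF 1 2] 3 by simp
qed

lemma K3:
  assumes F: "fin_supp F"
  shows "tensor_eq sc F (Phi F)"
proof -
  let ?P = "{p. F p \<noteq> 0}"
  have "tensor_eq sc (\<lambda>q. \<Sum>p\<in>?P. F p * tpure (fst p) (snd p) q)
      (\<lambda>q. \<Sum>p\<in>?P. F p * Phi (tpure (fst p) (snd p)) q)"
    by (rule teq_lincomb[where P=tpure]) (use F pure_K3 in \<open>auto simp: fin_supp_def\<close>)
  moreover have "Phi F = (\<lambda>q. \<Sum>p\<in>?P. F p * Phi (tpure (fst p) (snd p)) q)"
    unfolding Phi_tpure by (simp add: Phi_def E_def KG_def)
  ultimately show ?thesis using self_expand[OF F] by simp
qed

lemma Phi_idem: "fin_supp F \<Longrightarrow> Phi (Phi F) = Phi F"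
  by (metis K3 Phi_teq fin_Phi teq_sym)

lemma Phi_inj: "fin_supp F \<Longrightarrow> fin_supp F' \<Longrightarrow> Phi F = Phi F' \<Longrightarrow> tensor_eq sc F F'"
  by (metis K3 teq_sym teq_trans)

end


context kbasis
begin

definition S2 :: "('a \<times> 'a \<Rightarrow> 'k) set" where
  "S2 = {\<phi>. fin_supp \<phi> \<and> Phi \<phi> = \<phi> \<and> tmult sc \<phi> = 0}"

definition L2 :: "'a \<Rightarrow> ('a \<times> 'a \<Rightarrow> 'k) \<Rightarrow> ('a \<times> 'a \<Rightarrow> 'k)" where
  "L2 a \<phi> = Phi (tlmul a \<phi>)"

definition R2 :: "('a \<times> 'a \<Rightarrow> 'k) \<Rightarrow> 'a \<Rightarrow> ('a \<times> 'a \<Rightarrow> 'k)" where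
  "R2 \<phi> a = Phi (trmul \<phi> a)"

lemma Phi_tmult: "fin_supp F \<Longrightarrow> tmult sc (Phi F) = tmult sc F"
  by (metis K3 fin_Phi tmult_teq)

lemma S2_fin: "x \<in> S2 \<Longrightarrow> fin_supp x" by (simp add: S2_def)
lemma S2_Phi: "x \<in> S2 \<Longrightarrow> Phi x = x" by (simp add: S2_def)

lemma Phi_S2: "fin_supp F \<Longrightarrow> tmult sc F = 0 \<Longrightarrow> Phi F \<in> S2"
  by (simp add: S2_def fin_Phi Phi_idem Phi_tmult)

lemma L2_S2: "x \<in> S2 \<Longrightarrow> L2 a x \<in> S2"
  unfolding L2_def by (rule Phi_S2) (auto simp: S2_def fin_tlmul tmult_tlmul)

lemma R2_S2: "x \<in> S2 \<Longrightarrow> R2 x a \<in> S2"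
  unfolding R2_def by (rule Phi_S2) (auto simp: S2_def fin_trmul tmult_trmul)

lemma Phi_cong_K3: "fin_supp F \<Longrightarrow> Phi (tlmul a (Phi F)) = Phi (tlmul a F)"
  by (rule Phi_teq[OF teq_tlmul[OF teq_sym[OF K3]]]) (simp_all add: fin_Phi fin_tlmul)

lemma Phi_cong_K3r: "fin_supp F \<Longrightarrow> Phi (trmul (Phi F) a) = Phi (trmul F a)"
  by (rule Phi_teq[OF teq_trmul[OF teq_sym[OF K3]]]) (simp_all add: fin_Phi fin_trmul)

lemma bimod2: "bimodule sc S2 L2 R2"
  unfolding bimodule_def
proof (intro conjI ballI allI)
  show "0 \<in> S2"
    by (simp add: S2_def zero_fun_def Phi_zero tmult_def)
next
  fix x y assume x: "x \<in> S2" and y: "y \<in> S2"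
  show "x + y \<in> S2"
    using x y by (simp add: S2_def plus_fun_def fin_supp_add Phi_add tmult_add)
next
  fix x assume x: "x \<in> S2"
  have fx: "fin_supp x" using x by (simp add: S2_def)
  have fn: "fin_supp (\<lambda>p. - x p)" using fx by (simp add: fin_supp_def)
  have tn: "tmult sc (\<lambda>p. - x p) = - tmult sc x"
    unfolding tmult_E by (rule E_neg[OF fx addG_tmG])
  show "- x \<in> S2"
    using x fn tn by (simp add: S2_def fun_Compl_def Phi_neg fx)
next
  fix a x assume x: "x \<in> S2"
  show "L2 a x \<in> S2" by (rule L2_S2[OF x])
  show "R2 x a \<in> S2" by (rule R2_S2[OF x])
next
  fix a b x assume x: "x \<in> S2"
  have fx: "fin_supp x" using x by (simp add: S2_def)
  show "L2 (a * b) x = L2 a (L2 b x)"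
    unfolding L2_def by (simp add: tlmul_mult fx Phi_cong_K3 fin_tlmul)
  show "R2 x (a * b) = R2 (R2 x a) b"
    unfolding R2_def by (simp add: trmul_mult fx Phi_cong_K3r fin_trmul)
  show "L2 (a + b) x = L2 a x + L2 b x"
    unfolding L2_def plus_fun_def
    by (subst Phi_teq[OF tlmul_addl[OF fx]]) (simp_all add: fin_tlmul fx fin_supp_add Phi_add)
  show "R2 x (a + b) = R2 x a + R2 x b"
    unfolding R2_def plus_fun_def
    by (subst Phi_teq[OF trmul_addr[OF fx]]) (simp_all add: fin_trmul fx fin_supp_add Phi_add)
  show "L2 a (R2 x b) = R2 (L2 a x) b"
    unfolding L2_def R2_def
    by (simp add: Phi_cong_K3 Phi_cong_K3r fin_tlmul fin_trmul fx tl_tr_comm)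
next
  fix x assume x: "x \<in> S2"
  show "L2 1 x = x" using x by (simp add: L2_def tlmul_one S2_def)
  show "R2 x 1 = x" using x by (simp add: R2_def trmul_one S2_def)
next
  fix a x y assume x: "x \<in> S2" and y: "y \<in> S2"
  have fx: "fin_supp x" and fy: "fin_supp y" using x y by (simp_all add: S2_def)
  show "L2 a (x + y) = L2 a x + L2 a y"
    unfolding L2_def plus_fun_def tlmul_push push_add[OF fx fy]
    by (simp add: Phi_add fin_supp_push fx fy)
  show "R2 (x + y) a = R2 x a + R2 y a"
    unfolding R2_def plus_fun_def trmul_push push_add[OF fx fy]
    by (simp add: Phi_add fin_supp_push fx fy)
next
  fix c x assume x: "x \<in> S2"
  have fx: "fin_supp x" using x by (simp add: S2_def)
  have "Phi (tlmul (sc c 1) x) = Phi (\<lambda>q. c * x q)"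
    by (rule Phi_teq[OF tlmul_sc[OF fx]]) (simp_all add: fin_tlmul fx fin_supp_scale)
  moreover have "Phi (trmul x (sc c 1)) = Phi (\<lambda>q. c * x q)"
    by (rule Phi_teq[OF trmul_sc[OF fx]]) (simp_all add: fin_trmul fx fin_supp_scale)
  ultimately show "L2 (sc c 1) x = R2 x (sc c 1)" by (simp add: L2_def R2_def)
qed

end


context kbasis
begin

definition T :: "'a \<Rightarrow> 'a \<times> 'a \<Rightarrow> 'k" where
  "T a = (\<lambda>q. tpure a 1 q - tpure 1 a q)"

definition D :: "'a \<Rightarrow> 'a \<times> 'a \<Rightarrow> 'k" where
  "D a = Phi (T a)"

lemma fin_T: "fin_supp (T a)"
  unfolding T_def by (intro fin_supp_diff fin_supp_tpure)

lemma Phi_t2: "Phi (\<lambda>q. tpure u v q - tpure u' v' q) =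
    (\<lambda>q. rep u (fst q) * rep v (snd q) - rep u' (fst q) * rep v' (snd q))"
  by (simp add: Phi_diff fin_supp_tpure Phi_tpure)

lemma D_explicit: "D a = (\<lambda>q. rep a (fst q) * rep 1 (snd q) - rep 1 (fst q) * rep a (snd q))"
  unfolding D_def T_def by (rule Phi_t2)

lemma tmult_T: "tmult sc (T a) = 0"
  unfolding T_def by (simp add: tmult_diff fin_supp_tpure tmult_tpure)

lemma D_S2: "D a \<in> S2"
  unfolding D_def by (rule Phi_S2[OF fin_T tmult_T])

lemma D_lin: "D (sc c x + y) = L2 (sc c 1) (D x) + D y"
proof -
  have fD: "fin_supp (D x)" using D_S2 by (simp add: S2_def)
  have "L2 (sc c 1) (D x) = Phi (\<lambda>q. c * D x q)"
    unfolding L2_def by (rule Phi_teq[OF tlmul_sc[OF fD]]) (simp_all add: fin_tlmul fD fin_supp_scale)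
  also have "\<dots> = (\<lambda>q. c * D x q)"
    using D_S2[of x] by (simp add: Phi_scale S2_def)
  finally show ?thesis
    by (simp add: D_explicit plus_fun_def rep_add rep_sc algebra_simps)
qed

definition f1 :: "'a list \<Rightarrow> 'a \<times> 'a \<Rightarrow> 'k" where
  "f1 xs = D (xs ! 0)"

lemma f1_cochain: "hoch_cochain sc S2 L2 1 f1"
  unfolding hoch_cochain_def
proof (intro conjI allI impI)
  fix xs :: "'a list" show "f1 xs \<in> S2" by (simp add: f1_def D_S2)
next
  fix xs :: "'a list" and i :: nat and c x y
  assume "length xs = 1" "i < 1"
  then show "f1 (xs[i := sc c x + y]) = L2 (sc c 1) (f1 (xs[i := x])) + f1 (xs[i := y])"
    by (simp add: f1_def D_lin)
qed

lemma f1_cocycle: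
  assumes len: "length xs = Suc 1"
  shows "hoch_d L2 R2 1 f1 xs = 0"
proof -
  obtain a b where xs: "xs = [a, b]"
    using len by (cases xs; cases "tl xs") auto
  have 1: "L2 a (D b) = Phi (\<lambda>q. tpure (a * b) 1 q - tpure a b q)"
    unfolding L2_def D_def Phi_cong_K3[OF fin_T]
    by (simp add: T_def tlmul_push push_diff fin_supp_tpure push_tpure1)
  have 2: "R2 (D a) b = Phi (\<lambda>q. tpure a b q - tpure 1 (a * b) q)"
    unfolding R2_def D_def Phi_cong_K3r[OF fin_T]
    by (simp add: T_def trmul_push push_diff fin_supp_tpure push_tpure1)
  have "hoch_d L2 R2 1 f1 xs = L2 a (D b) + - D (a * b) + R2 (D a) b"
    by (simp add: xs hoch_d_def f1_def alt_sign_def)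
  also have "\<dots> = 0"
    unfolding 1 2 by (simp add: D_def T_def Phi_t2 fun_eq_iff)
  finally show ?thesis .
qed

lemma dir2_basis:
  assumes H: "hoch_dim0 sc TYPE('a \<times> 'a \<Rightarrow> 'k)"
  shows "\<exists>\<Delta>. nearly_frobenius sc \<Delta> \<and> normalized sc \<Delta>"
proof -
  have "hoch_vanish sc S2 L2 R2 1"
    using H bimod2 unfolding hoch_dim0_def by blast
  then obtain g where gc: "hoch_cochain sc S2 L2 0 g"
    and gf: "\<And>xs. length xs = 1 \<Longrightarrow> f1 xs = hoch_d L2 R2 0 g xs"
    unfolding hoch_vanish_def using f1_cochain f1_cocycle by force
  define u where "u = g []"
  have uS: "u \<in> S2" using gc by (simp add: hoch_cochain_def u_def)
  have fu: "fin_supp u" using uS by (simp add: S2_def)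
  have tu: "tmult sc u = 0" using uS by (simp add: S2_def)
  have Da: "D a = L2 a u + - R2 u a" for a
    using gf[of "[a]"] by (simp add: f1_def hoch_d_def alt_sign_def u_def)
  have teqa: "tensor_eq sc (T a) (\<lambda>q. tlmul a u q - trmul u a q)" for a
  proof (rule Phi_inj)
    show "fin_supp (T a)" by (rule fin_T)
    show "fin_supp (\<lambda>q. tlmul a u q - trmul u a q)" by (intro fin_supp_diff fin_tlmul fin_trmul fu)
    show "Phi (T a) = Phi (\<lambda>q. tlmul a u q - trmul u a q)"
      using Da[of a] unfolding D_def L2_def R2_def
      by (simp add: Phi_diff fin_tlmul fin_trmul fu fun_eq_iff)
  qed
  define e where "e = (\<lambda>q. tpure 1 1 q - u q)"
  have fe: "fin_supp e" unfolding e_def by (intro fin_supp_diff fin_supp_tpure fu)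
  have te: "tmult sc e = 1"
    unfolding e_def by (simp add: tmult_diff fin_supp_tpure fu tmult_tpure tu)
  have le: "tlmul a e = (\<lambda>q. tpure a 1 q - tlmul a u q)" for a
    unfolding e_def tlmul_push by (simp add: push_diff fin_supp_tpure fu push_tpure1)
  have re: "trmul e a = (\<lambda>q. tpure 1 a q - trmul u a q)" for a
    unfolding e_def trmul_push by (simp add: push_diff fin_supp_tpure fu push_tpure1)
  have ecomm: "tensor_eq sc (tlmul a e) (trmul e a)" for a
  proof -
    have "(\<lambda>p. T a p - (tlmul a u p - trmul u a p)) \<in> tensor_rel sc"
      using teqa[of a] by (simp add: tensor_eq_def)
    moreover have "(\<lambda>p. T a p - (tlmul a u p - trmul u a p)) = (\<lambda>p. tlmul a e p - trmul e a p)"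
      by (simp add: le re T_def fun_eq_iff algebra_simps)
    ultimately show ?thesis by (simp add: tensor_eq_def)
  qed
  define \<Delta> where "\<Delta> a = tlmul a e" for a
  have nf: "nearly_frobenius sc \<Delta>"
    unfolding nearly_frobenius_def
  proof (intro conjI allI)
    fix a show "fin_supp (\<Delta> a)" unfolding \<Delta>_def by (rule fin_tlmul[OF fe])
  next
    fix c a b
    have 1: "tensor_eq sc (tlmul (sc c a + b) e) (\<lambda>q. tlmul (sc c a) e q + tlmul b e q)"
      by (rule tlmul_addl[OF fe])
    have "tlmul (sc c a) e = tlmul (sc c 1) (tlmul a e)"
      using tlmul_mult[OF fe, of "sc c 1" a] by (simp add: sc_one_left[symmetric])
    then have 2: "tensor_eq sc (tlmul (sc c a) e) (\<lambda>q. c * tlmul a e q)"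
      using tlmul_sc[OF fin_tlmul[OF fe], of c a] by simp
    have 3: "tensor_eq sc (\<lambda>q. tlmul (sc c a) e q + tlmul b e q) (\<lambda>q. c * tlmul a e q + tlmul b e q)"
      by (rule teq_add[OF 2 teq_refl])
    show "tensor_eq sc (\<Delta> (sc c a + b)) (\<lambda>p. c * \<Delta> a p + \<Delta> b p)"
      unfolding \<Delta>_def using teq_trans[OF 1 3] .
  next
    fix a b
    have "tlmul (a * b) e = tlmul a (tlmul b e)" by (rule tlmul_mult[OF fe])
    moreover have "tensor_eq sc (tlmul a (tlmul b e)) (tlmul a (trmul e b))"
      by (rule teq_tlmul[OF ecomm fin_tlmul[OF fe] fin_trmul[OF fe]])
    moreover have "tlmul a (trmul e b) = trmul (tlmul a e) b" by (rule tl_tr_comm[OF fe])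
    ultimately show "tensor_eq sc (\<Delta> (a * b)) (trmul (\<Delta> a) b)"
      unfolding \<Delta>_def by simp
  next
    fix a b
    show "tensor_eq sc (\<Delta> (a * b)) (tlmul a (\<Delta> b))"
      unfolding \<Delta>_def tlmul_mult[OF fe] by (rule teq_refl)
  qed
  have nz: "normalized sc \<Delta>"
    unfolding normalized_def \<Delta>_def by (simp add: tmult_tlmul fe te)
  show ?thesis using nf nz by blast
qed

end

lemma dir2:
  fixes sc :: "'k::field \<Rightarrow> 'a::{ring,monoid_mult} \<Rightarrow> 'a"
  assumes ka: "k_algebra sc" and H: "hoch_dim0 sc TYPE('a \<times> 'a \<Rightarrow> 'k)"
  shows "\<exists>\<Delta>. nearly_frobenius sc \<Delta> \<and> normalized sc \<Delta>"
proof -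
  interpret kalg sc by unfold_locales (rule ka)
  obtain B where "V.independent B" "UNIV \<subseteq> V.span B"
    using V.basis_exists[of UNIV] by blast
  then interpret kbasis sc B by unfold_locales auto
  show ?thesis by (rule dir2_basis[OF H])
qed

theorem proposition27:
  fixes sc :: "'k::field \<Rightarrow> 'a::{ring,monoid_mult} \<Rightarrow> 'a"
  assumes "k_algebra sc"
  shows "((\<exists>\<Delta>. nearly_frobenius sc \<Delta> \<and> normalized sc \<Delta>) \<longrightarrow> hoch_dim0 sc TYPE('m::ab_group_add))
       \<and> (hoch_dim0 sc TYPE('a \<times> 'a \<Rightarrow> 'k) \<longrightarrow> (\<exists>\<Delta>. nearly_frobenius sc \<Delta> \<and> normalized sc \<Delta>))"
proof (intro conjI impI)
  assume "\<exists>\<Delta>. nearly_frobenius sc \<Delta> \<and> normalized sc \<Delta>"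
  then obtain \<Delta> where nf: "nearly_frobenius sc \<Delta>" and nz: "normalized sc \<Delta>" by blast
  show "hoch_dim0 sc TYPE('m::ab_group_add)"
    unfolding hoch_dim0_def
  proof (intro allI impI)
    fix S :: "'m set" and L R and n :: nat
    assume "bimodule sc S L R" and "1 \<le> n"
    then show "hoch_vanish sc S L R n" using dir1[OF assms nf nz] by blast
  qed
next
  assume "hoch_dim0 sc TYPE('a \<times> 'a \<Rightarrow> 'k)"
  then show "\<exists>\<Delta>. nearly_frobenius sc \<Delta> \<and> normalized sc \<Delta>" by (rule dir2[OF assms])
qed


end
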